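(* Let $P$ be a poset such that the interval monoid $\mathcal{M}(P)$ is a gcd-monoid, and let $[u,v]$ be an extreme spindle of $P$. Then the category $\mathcal{C}(P,u,v)$ is a gcd-category, and its universal monoid $\mathcal{M}(P,u,v)=\mathrm{U_{mon}}(\mathcal{C}(P,u,v))$ is a gcd-monoid.
   Context: For a poset $P$, $\mathcal{M}(P)$ is the monoid presented by generators $[x,y]$ ($x\le y$) and relations $[x,x]=1$, $[x,z]=[x,y][y,z]$ for $x\le y\le z$. A closed interval $[u,v]$ with $u<v$, containing some $z$ with $u<z<v$, is a spindle if the comparability relation on the open interval $\{x:u<x<v\}$ is an equivalence relation; it is an extreme spindle if moreover $u$ is minimal and $v$ is maximal in $P$. Let $\mathcal{C}_{u,v}$ be the set of maximal chains of $[u,v]$. The category $\mathcal{C}(P,u,v)$ (arrow-only, identities $[x,x]$ for $x\in P$) has underlying set $\{[x,y]: x\le y \text{ in } P,\ (x,y)\ne(u,v)\}\cup\mathcal{C}_{u,v}$, where each $Z\in\mathcal{C}_{u,v}$ has source $[u,u]$ and target $[v,v]$, and the only defined products are: $[u,u]\cdot Z=Z\cdot[v,v]=Z$ for $Z\in\mathcal{C}_{u,v}$; $[x,y]\cdot[y,z]=[x,z]$ whenever $x\le y\le z$ and $(x,z)\ne(u,v)$; $[u,z]\cdot[z,v]=Z$ whenever $u<z<v$ and $Z$ is the maximal chain of $[u,v]$ containing $z$. For a category $S$ (arrow-only), $\mathrm{U_{mon}}(S)$ is the monoid presented by generators $\varepsilon(x)$, $x\in S$, relations $\varepsilon(e)=1$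 for identities and $\varepsilon(x)\varepsilon(y)=\varepsilon(xy)$ whenever $xy$ is defined. Left/right divisibility in $C$: $a\leqslant b$ iff $b=ax$, $a\mathbin{\widetilde\leqslant}b$ iff $b=xa$. A category is conical if $xy$ being an identity forces $x$ to be an identity. A gcd-category is a conical, left and right cancellative category in which any two elements with the same source have a greatest lower bound for $\leqslant$ and any two with the same target have a greatest lower bound for $\mathbin{\widetilde\leqslant}$; a gcd-monoid is a gcd-category with one identity. *)

theory Defs
  imports Main
begin

text \<open>An (arrow-only) category: a set of arrows, source and target maps
(sending an arrow to the identity arrow at its source/target), and a
composition which is meaningful exactly on pairs with tgt x = src y.\<close>

record 'c cat =
  arr :: "'c set"
  src :: "'c \<Rightarrow> 'c"
  tgt :: "'c \<Rightarrow> 'c"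
  cmp :: "'c \<Rightarrow> 'c \<Rightarrow> 'c"

definition composable :: "'c cat \<Rightarrow> 'c \<Rightarrow> 'c \<Rightarrow> bool" where
  "composable C x y \<longleftrightarrow> x \<in> arr C \<and> y \<in> arr C \<and> tgt C x = src C y"

definition is_identity :: "'c cat \<Rightarrow> 'c \<Rightarrow> bool" where
  "is_identity C e \<longleftrightarrow> e \<in> arr C \<and> src C e = e"

definition category :: "'c cat \<Rightarrow> bool" where
  "category C \<longleftrightarrow>
     (\<forall>x\<in>arr C. src C x \<in> arr C \<and> tgt C x \<in> arr C
        \<and> src C (src C x) = src C x \<and> tgt C (src C x) = src C x
        \<and> src C (tgt C x) = tgt C x \<and> tgt C (tgt C x) = tgt C x
        \<and> cmp C (src C x) x = x \<and> cmp C x (tgt C x) = x)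
   \<and> (\<forall>x y. composable C x y \<longrightarrow>
        cmp C x y \<in> arr C \<and> src C (cmp C x y) = src C x \<and> tgt C (cmp C x y) = tgt C y)
   \<and> (\<forall>x y z. composable C x y \<and> composable C y z \<longrightarrow>
        cmp C (cmp C x y) z = cmp C x (cmp C y z))"

definition ldiv :: "'c cat \<Rightarrow> 'c \<Rightarrow> 'c \<Rightarrow> bool" where
  "ldiv C a b \<longleftrightarrow> (\<exists>x. composable C a x \<and> b = cmp C a x)"

definition rdiv :: "'c cat \<Rightarrow> 'c \<Rightarrow> 'c \<Rightarrow> bool" where
  "rdiv C a b \<longleftrightarrow> (\<exists>x. composable C x a \<and> b = cmp C x a)"

definition conical :: "'c cat \<Rightarrow> bool" where
  "conical C \<longleftrightarrow> (\<forall>x y. composable C x y \<and> is_identity C (cmp C x y) \<longrightarrow> is_identity C x)"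

definition left_cancellative :: "'c cat \<Rightarrow> bool" where
  "left_cancellative C \<longleftrightarrow>
     (\<forall>a x y. composable C a x \<and> composable C a y \<and> cmp C a x = cmp C a y \<longrightarrow> x = y)"

definition right_cancellative :: "'c cat \<Rightarrow> bool" where
  "right_cancellative C \<longleftrightarrow>
     (\<forall>a x y. composable C x a \<and> composable C y a \<and> cmp C x a = cmp C y a \<longrightarrow> x = y)"

definition has_left_gcds :: "'c cat \<Rightarrow> bool" where
  "has_left_gcds C \<longleftrightarrow>
     (\<forall>a\<in>arr C. \<forall>b\<in>arr C. src C a = src C b \<longrightarrow>
        (\<exists>d\<in>arr C. ldiv C d a \<and> ldiv C d b \<and>
            (\<forall>c\<in>arr C. ldiv C c a \<and> ldiv C c b \<longrightarrow> ldiv C c d)))"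

definition has_right_gcds :: "'c cat \<Rightarrow> bool" where
  "has_right_gcds C \<longleftrightarrow>
     (\<forall>a\<in>arr C. \<forall>b\<in>arr C. tgt C a = tgt C b \<longrightarrow>
        (\<exists>d\<in>arr C. rdiv C d a \<and> rdiv C d b \<and>
            (\<forall>c\<in>arr C. rdiv C c a \<and> rdiv C c b \<longrightarrow> rdiv C c d)))"

definition gcd_category :: "'c cat \<Rightarrow> bool" where
  "gcd_category C \<longleftrightarrow> category C \<and> conical C \<and> left_cancellative C \<and> right_cancellative C
      \<and> has_left_gcds C \<and> has_right_gcds C"

definition gcd_monoid :: "'c cat \<Rightarrow> bool" where
  "gcd_monoid C \<longleftrightarrow> gcd_category C \<and> (\<exists>!e. is_identity C e)"

inductive pcong :: "('g list \<times> 'g list) set \<Rightarrow> 'g list \<Rightarrow> 'g list \<Rightarrow> bool" for R where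
  refl: "pcong R xs xs"
| sym: "pcong R xs ys \<Longrightarrow> pcong R ys xs"
| trans: "pcong R xs ys \<Longrightarrow> pcong R ys zs \<Longrightarrow> pcong R xs zs"
| rel: "(l, r) \<in> R \<Longrightarrow> pcong R (xs @ l @ ys) (xs @ r @ ys)"

definition pclass :: "('g list \<times> 'g list) set \<Rightarrow> 'g list \<Rightarrow> 'g list set" where
  "pclass R xs = {ys. pcong R xs ys}"

text \<open>The monoid presented by generators G and relations R, viewed as a
one-object category whose elements are congruence classes of words.\<close>

definition pres_monoid :: "'g set \<Rightarrow> ('g list \<times> 'g list) set \<Rightarrow> 'g list set cat" where
  "pres_monoid G R =
     \<lparr> arr = {pclass R xs | xs. xs \<in> lists G},
       src = (\<lambda>_. pclass R []),
       tgt = (\<lambda>_. pclass R []),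
       cmp = (\<lambda>X Y. {zs. \<exists>xs\<in>X. \<exists>ys\<in>Y. pcong R (xs @ ys) zs}) \<rparr>"

definition interval_monoid :: "'a::order set \<Rightarrow> ('a \<times> 'a) list set cat" where
  "interval_monoid P =
     pres_monoid {(x, y). x \<in> P \<and> y \<in> P \<and> x \<le> y}
       ({([(x, x)], []) | x. x \<in> P} \<union>
        {([(x, z)], [(x, y), (y, z)]) | x y z. x \<in> P \<and> y \<in> P \<and> z \<in> P \<and> x \<le> y \<and> y \<le> z})"

definition spindle :: "'a::order set \<Rightarrow> 'a \<Rightarrow> 'a \<Rightarrow> bool" where
  "spindle P u v \<longleftrightarrow> u \<in> P \<and> v \<in> P \<and> u < v \<and> (\<exists>z\<in>P. u < z \<and> z < v) \<and>
     (let I = {x\<in>P. u < x \<and> x < v} in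
        equiv I {(a, b). a \<in> I \<and> b \<in> I \<and> (a \<le> b \<or> b \<le> a)})"

definition extreme_spindle :: "'a::order set \<Rightarrow> 'a \<Rightarrow> 'a \<Rightarrow> bool" where
  "extreme_spindle P u v \<longleftrightarrow> spindle P u v \<and>
     (\<forall>x\<in>P. x \<le> u \<longrightarrow> x = u) \<and> (\<forall>x\<in>P. v \<le> x \<longrightarrow> x = v)"

definition is_chain :: "'a::order set \<Rightarrow> bool" where
  "is_chain Z \<longleftrightarrow> (\<forall>a\<in>Z. \<forall>b\<in>Z. a \<le> b \<or> b \<le> a)"

definition max_chains :: "'a::order set \<Rightarrow> 'a \<Rightarrow> 'a \<Rightarrow> 'a set set" where
  "max_chains P u v = {Z. Z \<subseteq> {x\<in>P. u \<le> x \<and> x \<le> v} \<and> is_chain Z \<and>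
      (\<forall>W. W \<subseteq> {x\<in>P. u \<le> x \<and> x \<le> v} \<and> is_chain W \<and> Z \<subseteq> W \<longrightarrow> W = Z)}"

datatype 'a celt = Iv 'a 'a | Ch "'a set"

fun cpuv_src :: "'a \<Rightarrow> 'a celt \<Rightarrow> 'a celt" where
  "cpuv_src u (Iv x y) = Iv x x"
| "cpuv_src u (Ch Z) = Iv u u"

fun cpuv_tgt :: "'a \<Rightarrow> 'a celt \<Rightarrow> 'a celt" where
  "cpuv_tgt v (Iv x y) = Iv y y"
| "cpuv_tgt v (Ch Z) = Iv v v"

text \<open>Composition (only meaningful on composable pairs).\<close>

fun cpuv_cmp :: "'a::order set \<Rightarrow> 'a \<Rightarrow> 'a \<Rightarrow> 'a celt \<Rightarrow> 'a celt \<Rightarrow> 'a celt" where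
  "cpuv_cmp P u v (Iv x y) (Iv y' z) =
     (if x = u \<and> z = v then Ch (THE Z. Z \<in> max_chains P u v \<and> y \<in> Z) else Iv x z)"
| "cpuv_cmp P u v (Iv x y) (Ch Z) = Ch Z"
| "cpuv_cmp P u v (Ch Z) (Iv x y) = Ch Z"
| "cpuv_cmp P u v (Ch Z) (Ch W) = Ch Z"

definition Cpuv :: "'a::order set \<Rightarrow> 'a \<Rightarrow> 'a \<Rightarrow> 'a celt cat" where
  "Cpuv P u v =
     \<lparr> arr = {Iv x y | x y. x \<in> P \<and> y \<in> P \<and> x \<le> y \<and> (x, y) \<noteq> (u, v)} \<union> Ch ` max_chains P u v,
       src = cpuv_src u,
       tgt = cpuv_tgt v,
       cmp = cpuv_cmp P u v \<rparr>"

definition umon :: "'c cat \<Rightarrow> 'c list set cat" where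
  "umon S = pres_monoid (arr S)
     ({([e], []) | e. is_identity S e} \<union>
      {([x, y], [cmp S x y]) | x y. composable S x y})"

end

theory Submission
  imports Defs
begin


section \<open>Presented monoids\<close>

lemma pcong_ctx: "pcong R xs ys \<Longrightarrow> pcong R (as @ xs @ bs) (as @ ys @ bs)"
proof (induction rule: pcong.induct)
  case (rel l r xs ys)
  have "pcong R ((as @ xs) @ l @ (ys @ bs)) ((as @ xs) @ r @ (ys @ bs))" by (rule pcong.rel[OF rel])
  then show ?case by simp
qed (auto intro: pcong.intros)

lemma pcong_app2: "pcong R a a' \<Longrightarrow> pcong R b b' \<Longrightarrow> pcong R (a @ b) (a' @ b')"
proof -
  assume 1: "pcong R a a'" and 2: "pcong R b b'"
  have "pcong R ([] @ a @ b) ([] @ a' @ b)" using pcong_ctx[OF 1] .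
  moreover have "pcong R (a' @ b @ []) (a' @ b' @ [])" using pcong_ctx[OF 2] .
  ultimately show ?thesis by (auto intro: pcong.trans)
qed

lemma pcong_rel1: "(l, r) \<in> R \<Longrightarrow> pcong R l r"
  using pcong.rel[of l r R "[]" "[]"] by simp

lemma pcong_mono: assumes h: "\<And>l r. (l, r) \<in> R \<Longrightarrow> pcong S l r" shows "pcong R xs ys \<Longrightarrow> pcong S xs ys"
proof (induction rule: pcong.induct)
  case (rel l r xs ys) then show ?case by (intro pcong_ctx h)
qed (auto intro: pcong.intros)

lemma pcong_rev: "pcong R xs ys \<Longrightarrow> pcong ((\<lambda>(l, r). (rev l, rev r)) ` R) (rev xs) (rev ys)"
proof (induction rule: pcong.induct)
  case (rel l r xs ys)
  have "(rev l, rev r) \<in> (\<lambda>(l, r). (rev l, rev r)) ` R" using rel by force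
  from pcong.rel[OF this, of "rev ys" "rev xs"] show ?case by simp
qed (auto intro: pcong.intros)

lemma pclass_eq_iff: "pclass R xs = pclass R ys \<longleftrightarrow> pcong R xs ys"
proof
  assume "pclass R xs = pclass R ys"
  moreover have "ys \<in> pclass R ys" by (simp add: pclass_def pcong.refl)
  ultimately have "ys \<in> pclass R xs" by simp
  then show "pcong R xs ys" by (simp add: pclass_def)
next
  assume h: "pcong R xs ys"
  show "pclass R xs = pclass R ys"
    unfolding pclass_def using h by (auto intro: pcong.trans pcong.sym)
qed

lemma pm_simps:
  "arr (pres_monoid G R) = {pclass R xs | xs. xs \<in> lists G}"
  "src (pres_monoid G R) X = pclass R []"
  "tgt (pres_monoid G R) X = pclass R []"
  by (simp_all add: pres_monoid_def)

lemma pm_cmp: "cmp (pres_monoid G R) (pclass R xs) (pclass R ys) = pclass R (xs @ ys)"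
proof -
  have "{zs. \<exists>xs'\<in>pclass R xs. \<exists>ys'\<in>pclass R ys. pcong R (xs' @ ys') zs} = pclass R (xs @ ys)"
  proof (intro set_eqI iffI)
    fix zs assume "zs \<in> {zs. \<exists>xs'\<in>pclass R xs. \<exists>ys'\<in>pclass R ys. pcong R (xs' @ ys') zs}"
    then obtain xs' ys' where "pcong R xs xs'" "pcong R ys ys'" "pcong R (xs' @ ys') zs"
      by (auto simp: pclass_def)
    then show "zs \<in> pclass R (xs @ ys)" unfolding pclass_def
      by (auto intro: pcong.trans pcong_app2)
  next
    fix zs assume "zs \<in> pclass R (xs @ ys)"
    then show "zs \<in> {zs. \<exists>xs'\<in>pclass R xs. \<exists>ys'\<in>pclass R ys. pcong R (xs' @ ys') zs}"
      by (auto simp: pclass_def intro: pcong.refl)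
  qed
  then show ?thesis by (simp add: pres_monoid_def)
qed

lemma pm_arrI: "xs \<in> lists G \<Longrightarrow> pclass R xs \<in> arr (pres_monoid G R)"
  by (auto simp: pm_simps)

lemma pm_arrE: "X \<in> arr (pres_monoid G R) \<Longrightarrow> (\<And>xs. xs \<in> lists G \<Longrightarrow> X = pclass R xs \<Longrightarrow> thesis) \<Longrightarrow> thesis"
  by (auto simp: pm_simps)

lemma pm_composable: "composable (pres_monoid G R) X Y \<longleftrightarrow> X \<in> arr (pres_monoid G R) \<and> Y \<in> arr (pres_monoid G R)"
  by (simp add: composable_def pm_simps)

lemma category_pm: "category (pres_monoid G R)"
  unfolding category_def
proof (intro conjI ballI allI impI)
  fix x assume x: "x \<in> arr (pres_monoid G R)"
  then obtain xs where xs: "xs \<in> lists G" "x = pclass R xs" by (rule pm_arrE)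
  show "src (pres_monoid G R) x \<in> arr (pres_monoid G R)" "tgt (pres_monoid G R) x \<in> arr (pres_monoid G R)"
    by (auto simp: pm_simps intro!: exI[of _ "[]"])
  show "src (pres_monoid G R) (src (pres_monoid G R) x) = src (pres_monoid G R) x"
       "tgt (pres_monoid G R) (src (pres_monoid G R) x) = src (pres_monoid G R) x"
       "src (pres_monoid G R) (tgt (pres_monoid G R) x) = tgt (pres_monoid G R) x"
       "tgt (pres_monoid G R) (tgt (pres_monoid G R) x) = tgt (pres_monoid G R) x"
    by (simp_all add: pm_simps)
  show "cmp (pres_monoid G R) (src (pres_monoid G R) x) x = x"
       "cmp (pres_monoid G R) x (tgt (pres_monoid G R) x) = x"
    using xs by (simp_all add: pm_simps pm_cmp)
next
  fix x y assume "composable (pres_monoid G R) x y"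
  then obtain xs ys where "xs \<in> lists G" "x = pclass R xs" "ys \<in> lists G" "y = pclass R ys"
    by (auto simp: pm_composable elim!: pm_arrE)
  then show "cmp (pres_monoid G R) x y \<in> arr (pres_monoid G R)"
    "src (pres_monoid G R) (cmp (pres_monoid G R) x y) = src (pres_monoid G R) x"
    "tgt (pres_monoid G R) (cmp (pres_monoid G R) x y) = tgt (pres_monoid G R) y"
    by (auto simp: pm_cmp pm_simps intro!: exI[of _ "xs @ ys"])
next
  fix x y z assume "composable (pres_monoid G R) x y \<and> composable (pres_monoid G R) y z"
  then obtain xs ys zs where "x = pclass R xs" "y = pclass R ys" "z = pclass R zs"
    by (auto simp: pm_composable elim!: pm_arrE)
  then show "cmp (pres_monoid G R) (cmp (pres_monoid G R) x y) z = cmp (pres_monoid G R) x (cmp (pres_monoid G R) y z)"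
    by (simp add: pm_cmp)
qed

lemma pm_is_identity: "is_identity (pres_monoid G R) e \<longleftrightarrow> e = pclass R []"
  by (auto simp: is_identity_def pm_simps)

lemma pm_unique_id: "\<exists>!e. is_identity (pres_monoid G R) e"
  by (simp add: pm_is_identity)

lemma pm_ldiv: "xs \<in> lists G \<Longrightarrow> ldiv (pres_monoid G R) (pclass R xs) (pclass R ys) \<longleftrightarrow> (\<exists>z\<in>lists G. pcong R (xs @ z) ys)"
proof
  assume "ldiv (pres_monoid G R) (pclass R xs) (pclass R ys)"
  then obtain X where "X \<in> arr (pres_monoid G R)" "pclass R ys = cmp (pres_monoid G R) (pclass R xs) X"
    unfolding ldiv_def pm_composable by auto
  moreover obtain z where "z \<in> lists G" "X = pclass R z" using \<open>X \<in> arr (pres_monoid G R)\<close> by (rule pm_arrE)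
  ultimately have "z \<in> lists G" "pclass R ys = pclass R (xs @ z)" by (simp_all add: pm_cmp)
  then show "\<exists>z\<in>lists G. pcong R (xs @ z) ys" by (auto simp: pclass_eq_iff intro: pcong.sym)
next
  assume "xs \<in> lists G" "\<exists>z\<in>lists G. pcong R (xs @ z) ys"
  then obtain z where "z \<in> lists G" "pcong R (xs @ z) ys" by auto
  moreover have "pclass R z \<in> arr (pres_monoid G R)" "pclass R xs \<in> arr (pres_monoid G R)"
    using \<open>z \<in> lists G\<close> \<open>xs \<in> lists G\<close> by (simp_all add: pm_arrI)
  moreover have "pclass R ys = cmp (pres_monoid G R) (pclass R xs) (pclass R z)"
    using \<open>pcong R (xs @ z) ys\<close> by (simp add: pm_cmp pclass_eq_iff pcong.sym)
  ultimately show "ldiv (pres_monoid G R) (pclass R xs) (pclass R ys)" unfolding ldiv_def pm_composable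
    by blast
qed

lemma pm_rdiv: "xs \<in> lists G \<Longrightarrow> rdiv (pres_monoid G R) (pclass R xs) (pclass R ys) \<longleftrightarrow> (\<exists>z\<in>lists G. pcong R (z @ xs) ys)"
proof
  assume "rdiv (pres_monoid G R) (pclass R xs) (pclass R ys)"
  then obtain X where "X \<in> arr (pres_monoid G R)" "pclass R ys = cmp (pres_monoid G R) X (pclass R xs)"
    unfolding rdiv_def pm_composable by auto
  moreover obtain z where "z \<in> lists G" "X = pclass R z" using \<open>X \<in> arr (pres_monoid G R)\<close> by (rule pm_arrE)
  ultimately have "z \<in> lists G" "pclass R ys = pclass R (z @ xs)" by (simp_all add: pm_cmp)
  then show "\<exists>z\<in>lists G. pcong R (z @ xs) ys" by (auto simp: pclass_eq_iff intro: pcong.sym)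
next
  assume "xs \<in> lists G" "\<exists>z\<in>lists G. pcong R (z @ xs) ys"
  then obtain z where "z \<in> lists G" "pcong R (z @ xs) ys" by auto
  moreover have "pclass R z \<in> arr (pres_monoid G R)" "pclass R xs \<in> arr (pres_monoid G R)"
    using \<open>z \<in> lists G\<close> \<open>xs \<in> lists G\<close> by (simp_all add: pm_arrI)
  moreover have "pclass R ys = cmp (pres_monoid G R) (pclass R z) (pclass R xs)"
    using \<open>pcong R (z @ xs) ys\<close> by (simp add: pm_cmp pclass_eq_iff pcong.sym)
  ultimately show "rdiv (pres_monoid G R) (pclass R xs) (pclass R ys)" unfolding rdiv_def pm_composable
    by blast
qed

lemma pm_left_canc: "left_cancellative (pres_monoid G R) \<longleftrightarrow>
   (\<forall>a\<in>lists G. \<forall>x\<in>lists G. \<forall>y\<in>lists G. pcong R (a @ x) (a @ y) \<longrightarrow> pcong R x y)"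
proof
  assume L: "left_cancellative (pres_monoid G R)"
  show "\<forall>a\<in>lists G. \<forall>x\<in>lists G. \<forall>y\<in>lists G. pcong R (a @ x) (a @ y) \<longrightarrow> pcong R x y"
  proof (intro ballI impI)
    fix a x y assume "a \<in> lists G" "x \<in> lists G" "y \<in> lists G" "pcong R (a @ x) (a @ y)"
    then have "composable (pres_monoid G R) (pclass R a) (pclass R x)"
      "composable (pres_monoid G R) (pclass R a) (pclass R y)"
      "cmp (pres_monoid G R) (pclass R a) (pclass R x) = cmp (pres_monoid G R) (pclass R a) (pclass R y)"
      by (simp_all add: pm_composable pm_arrI pm_cmp pclass_eq_iff)
    with L have "pclass R x = pclass R y" unfolding left_cancellative_def by blast
    then show "pcong R x y" by (simp add: pclass_eq_iff)
  qed
next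
  assume W: "\<forall>a\<in>lists G. \<forall>x\<in>lists G. \<forall>y\<in>lists G. pcong R (a @ x) (a @ y) \<longrightarrow> pcong R x y"
  show "left_cancellative (pres_monoid G R)" unfolding left_cancellative_def
  proof (intro allI impI)
    fix A X Y assume h: "composable (pres_monoid G R) A X \<and> composable (pres_monoid G R) A Y \<and>
       cmp (pres_monoid G R) A X = cmp (pres_monoid G R) A Y"
    then have "A \<in> arr (pres_monoid G R)" "X \<in> arr (pres_monoid G R)" "Y \<in> arr (pres_monoid G R)"
      by (simp_all add: pm_composable)
    then obtain a x y where "a \<in> lists G" "A = pclass R a" "x \<in> lists G" "X = pclass R x"
      "y \<in> lists G" "Y = pclass R y" by (auto simp: pm_simps)
    moreover from h this have "pcong R (a @ x) (a @ y)" by (simp add: pm_cmp pclass_eq_iff)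
    ultimately have "pcong R x y" using W by blast
    then show "X = Y" using \<open>X = pclass R x\<close> \<open>Y = pclass R y\<close> by (simp add: pclass_eq_iff)
  qed
qed

lemma pm_right_canc: "right_cancellative (pres_monoid G R) \<longleftrightarrow>
   (\<forall>a\<in>lists G. \<forall>x\<in>lists G. \<forall>y\<in>lists G. pcong R (x @ a) (y @ a) \<longrightarrow> pcong R x y)"
proof
  assume L: "right_cancellative (pres_monoid G R)"
  show "\<forall>a\<in>lists G. \<forall>x\<in>lists G. \<forall>y\<in>lists G. pcong R (x @ a) (y @ a) \<longrightarrow> pcong R x y"
  proof (intro ballI impI)
    fix a x y assume "a \<in> lists G" "x \<in> lists G" "y \<in> lists G" "pcong R (x @ a) (y @ a)"
    then have "composable (pres_monoid G R) (pclass R x) (pclass R a)"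
      "composable (pres_monoid G R) (pclass R y) (pclass R a)"
      "cmp (pres_monoid G R) (pclass R x) (pclass R a) = cmp (pres_monoid G R) (pclass R y) (pclass R a)"
      by (simp_all add: pm_composable pm_arrI pm_cmp pclass_eq_iff)
    with L have "pclass R x = pclass R y" unfolding right_cancellative_def by blast
    then show "pcong R x y" by (simp add: pclass_eq_iff)
  qed
next
  assume W: "\<forall>a\<in>lists G. \<forall>x\<in>lists G. \<forall>y\<in>lists G. pcong R (x @ a) (y @ a) \<longrightarrow> pcong R x y"
  show "right_cancellative (pres_monoid G R)" unfolding right_cancellative_def
  proof (intro allI impI)
    fix A X Y assume h: "composable (pres_monoid G R) X A \<and> composable (pres_monoid G R) Y A \<and>
       cmp (pres_monoid G R) X A = cmp (pres_monoid G R) Y A"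
    then have "A \<in> arr (pres_monoid G R)" "X \<in> arr (pres_monoid G R)" "Y \<in> arr (pres_monoid G R)"
      by (simp_all add: pm_composable)
    then obtain a x y where "a \<in> lists G" "A = pclass R a" "x \<in> lists G" "X = pclass R x"
      "y \<in> lists G" "Y = pclass R y" by (auto simp: pm_simps)
    moreover from h this have "pcong R (x @ a) (y @ a)" by (simp add: pm_cmp pclass_eq_iff)
    ultimately have "pcong R x y" using W by blast
    then show "X = Y" using \<open>X = pclass R x\<close> \<open>Y = pclass R y\<close> by (simp add: pclass_eq_iff)
  qed
qed

definition wLD where "wLD R G a b \<longleftrightarrow> (\<exists>z\<in>lists G. pcong R (a @ z) b)"
definition wRD where "wRD R G a b \<longleftrightarrow> (\<exists>z\<in>lists G. pcong R (z @ a) b)"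

lemma pm_ldiv': "xs \<in> lists G \<Longrightarrow> ldiv (pres_monoid G R) (pclass R xs) (pclass R ys) \<longleftrightarrow> wLD R G xs ys"
  by (simp add: pm_ldiv wLD_def)
lemma pm_rdiv': "xs \<in> lists G \<Longrightarrow> rdiv (pres_monoid G R) (pclass R xs) (pclass R ys) \<longleftrightarrow> wRD R G xs ys"
  by (simp add: pm_rdiv wRD_def)

lemma all_arr_pm: "(\<forall>X\<in>arr (pres_monoid G R). Q X) \<longleftrightarrow> (\<forall>x\<in>lists G. Q (pclass R x))"
  by (auto simp: pm_simps)
lemma ex_arr_pm: "(\<exists>X\<in>arr (pres_monoid G R). Q X) \<longleftrightarrow> (\<exists>x\<in>lists G. Q (pclass R x))"
  by (auto simp: pm_simps)

lemma pm_left_gcds: "has_left_gcds (pres_monoid G R) \<longleftrightarrow>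
  (\<forall>b\<in>lists G. \<forall>c\<in>lists G. \<exists>d\<in>lists G. wLD R G d b \<and> wLD R G d c \<and>
      (\<forall>a\<in>lists G. wLD R G a b \<and> wLD R G a c \<longrightarrow> wLD R G a d))" (is "_ \<longleftrightarrow> ?R")
proof -
  have "has_left_gcds (pres_monoid G R) \<longleftrightarrow>
    (\<forall>b\<in>lists G. \<forall>c\<in>lists G. \<exists>d\<in>lists G. ldiv (pres_monoid G R) (pclass R d) (pclass R b) \<and> ldiv (pres_monoid G R) (pclass R d) (pclass R c) \<and>
      (\<forall>a\<in>lists G. ldiv (pres_monoid G R) (pclass R a) (pclass R b) \<and> ldiv (pres_monoid G R) (pclass R a) (pclass R c) \<longrightarrow> ldiv (pres_monoid G R) (pclass R a) (pclass R d)))"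
    unfolding has_left_gcds_def all_arr_pm ex_arr_pm by (simp add: pm_simps)
  also have "\<dots> \<longleftrightarrow> ?R"
    by (simp add: pm_ldiv' cong: ball_cong bex_cong)
  finally show ?thesis .
qed

lemma pm_right_gcds: "has_right_gcds (pres_monoid G R) \<longleftrightarrow>
  (\<forall>b\<in>lists G. \<forall>c\<in>lists G. \<exists>d\<in>lists G. wRD R G d b \<and> wRD R G d c \<and>
      (\<forall>a\<in>lists G. wRD R G a b \<and> wRD R G a c \<longrightarrow> wRD R G a d))" (is "_ \<longleftrightarrow> ?R")
proof -
  have "has_right_gcds (pres_monoid G R) \<longleftrightarrow>
    (\<forall>b\<in>lists G. \<forall>c\<in>lists G. \<exists>d\<in>lists G. rdiv (pres_monoid G R) (pclass R d) (pclass R b) \<and> rdiv (pres_monoid G R) (pclass R d) (pclass R c) \<and>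
      (\<forall>a\<in>lists G. rdiv (pres_monoid G R) (pclass R a) (pclass R b) \<and> rdiv (pres_monoid G R) (pclass R a) (pclass R c) \<longrightarrow> rdiv (pres_monoid G R) (pclass R a) (pclass R d)))"
    unfolding has_right_gcds_def all_arr_pm ex_arr_pm by (simp add: pm_simps)
  also have "\<dots> \<longleftrightarrow> ?R"
    by (simp add: pm_rdiv' cong: ball_cong bex_cong)
  finally show ?thesis .
qed




section \<open>Normal forms for universal monoids\<close>

definition urel :: "'c cat \<Rightarrow> ('c list \<times> 'c list) set" where
  "urel C = {([e], []) | e. is_identity C e} \<union> {([x, y], [cmp C x y]) | x y. composable C x y}"

lemma umon_eq: "umon C = pres_monoid (arr C) (urel C)"
  by (simp add: umon_def urel_def)

fun reduced :: "'c cat \<Rightarrow> 'c list \<Rightarrow> bool" where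
  "reduced C [] = True"
| "reduced C [x] = (\<not> is_identity C x)"
| "reduced C (x # y # ys) = (\<not> is_identity C x \<and> \<not> composable C x y \<and> reduced C (y # ys))"

definition push :: "'c cat \<Rightarrow> 'c \<Rightarrow> 'c list \<Rightarrow> 'c list" where
  "push C x ws = (if is_identity C x then ws else
     (case ws of [] \<Rightarrow> [x] | w # ws' \<Rightarrow> if composable C x w then cmp C x w # ws' else x # ws))"

definition red :: "'c cat \<Rightarrow> 'c list \<Rightarrow> 'c list" where
  "red C xs = foldr (push C) xs []"

lemma reduced_Cons: "reduced C (x # ws) \<longleftrightarrow> \<not> is_identity C x \<and> (ws \<noteq> [] \<longrightarrow> \<not> composable C x (hd ws)) \<and> reduced C ws"
  by (cases ws) auto

lemma red_Nil[simp]: "red C [] = []" by (simp add: red_def)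
lemma red_Cons: "red C (x # xs) = push C x (red C xs)" by (simp add: red_def)
lemma red_append: "red C (xs @ ys) = foldr (push C) xs (red C ys)" by (simp add: red_def)

lemma push_nonid_ne: "\<not> is_identity C x \<Longrightarrow> push C x ws \<noteq> []"
  by (auto simp: push_def split: list.splits)

lemma foldr_push_Nil: "foldr (push C) a W = [] \<Longrightarrow> W = [] \<and> foldr (push C) a [] = []"
proof (induction a)
  case (Cons x a)
  show ?case
  proof (cases "is_identity C x")
    case True
    then have "push C x V = V" for V by (simp add: push_def)
    with Cons show ?thesis by simp
  next
    case False
    with Cons.prems push_nonid_ne[OF False] show ?thesis by simp
  qed
qed simp

lemma pcong_push: "pcong (urel C) (x # ws) (push C x ws)"
proof (cases "is_identity C x")
  case True
  then have "([x], []) \<in> urel C" by (auto simp: urel_def)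
  from pcong.rel[OF this, of "[]" ws] True show ?thesis by (simp add: push_def)
next
  case False
  show ?thesis
  proof (cases ws)
    case Nil then show ?thesis using False by (simp add: push_def pcong.refl)
  next
    case (Cons w ws')
    show ?thesis
    proof (cases "composable C x w")
      case True
      then have "([x, w], [cmp C x w]) \<in> urel C" by (auto simp: urel_def)
      from pcong.rel[OF this, of "[]" ws'] True False Cons show ?thesis by (simp add: push_def)
    qed (use False Cons in \<open>simp_all add: push_def pcong.refl\<close>)
  qed
qed

lemma pcong_to_red: "pcong (urel C) xs (red C xs)"
proof (induction xs)
  case Nil then show ?case by (simp add: pcong.refl)
next
  case (Cons x xs)
  have "pcong (urel C) ([x] @ xs @ []) ([x] @ red C xs @ [])" by (rule pcong_ctx[OF Cons])
  then have "pcong (urel C) (x # xs) (x # red C xs)" by simp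
  then show ?case using pcong_push[of C x "red C xs"] by (simp add: red_Cons pcong.trans)
qed

locale ccat =
  fixes C :: "'c cat"
  assumes cat: "category C" and con: "conical C"
begin

lemma cS:
  assumes "x \<in> arr C"
  shows "src C x \<in> arr C" "tgt C x \<in> arr C" "src C (src C x) = src C x" "tgt C (src C x) = src C x"
    "src C (tgt C x) = tgt C x" "tgt C (tgt C x) = tgt C x" "cmp C (src C x) x = x" "cmp C x (tgt C x) = x"
  using cat assms unfolding category_def by auto

lemma cC:
  assumes "composable C x y"
  shows "cmp C x y \<in> arr C" "src C (cmp C x y) = src C x" "tgt C (cmp C x y) = tgt C y"
  using cat assms unfolding category_def by auto

lemma cA: "composable C x y \<Longrightarrow> composable C y z \<Longrightarrow> cmp C (cmp C x y) z = cmp C x (cmp C y z)"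
  using cat unfolding category_def by blast

lemma comp_arr: "composable C x y \<Longrightarrow> x \<in> arr C \<and> y \<in> arr C \<and> tgt C x = src C y"
  by (simp add: composable_def)

lemma id_tgt: "is_identity C e \<Longrightarrow> tgt C e = e"
  unfolding is_identity_def using cS(4)[of e] by auto

lemma src_id: "x \<in> arr C \<Longrightarrow> is_identity C (src C x)"
  by (simp add: cS is_identity_def)
lemma tgt_id: "x \<in> arr C \<Longrightarrow> is_identity C (tgt C x)"
  by (simp add: cS is_identity_def)

lemma id_left: "composable C e y \<Longrightarrow> is_identity C e \<Longrightarrow> cmp C e y = y"
  unfolding composable_def using id_tgt[of e] cS(7)[of y] by auto

lemma id_right: "composable C x e \<Longrightarrow> is_identity C e \<Longrightarrow> cmp C x e = x"
  unfolding composable_def is_identity_def using cS(8)[of x] cS(5)[of x] by auto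

lemma con_l: "composable C x y \<Longrightarrow> is_identity C (cmp C x y) \<Longrightarrow> is_identity C x"
  using con unfolding conical_def by blast

lemma con_r: "composable C x y \<Longrightarrow> is_identity C (cmp C x y) \<Longrightarrow> is_identity C y"
  using con_l[of x y] id_left[of x y] by auto

lemma push_lists: "x \<in> arr C \<Longrightarrow> ws \<in> lists (arr C) \<Longrightarrow> push C x ws \<in> lists (arr C)"
  by (auto simp: push_def cC split: list.splits)

lemma red_lists: "xs \<in> lists (arr C) \<Longrightarrow> red C xs \<in> lists (arr C)"
  by (induction xs) (auto simp: red_Cons push_lists)

lemma push_id: "is_identity C e \<Longrightarrow> push C e ws = ws"
  by (simp add: push_def)

lemma push_reduced: "reduced C ws \<Longrightarrow> reduced C (push C x ws)"
proof (cases ws)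
  case (Cons w ws')
  assume r: "reduced C ws"
  show ?thesis
  proof (cases "is_identity C x")
    case False
    show ?thesis
    proof (cases "composable C x w")
      case True
      have "\<not> is_identity C (cmp C x w)" using con_l[OF True] False by blast
      moreover have "ws' \<noteq> [] \<Longrightarrow> \<not> composable C (cmp C x w) (hd ws')"
        using r Cons cC[OF True] comp_arr[OF True] by (auto simp: reduced_Cons composable_def)
      ultimately show ?thesis using r Cons True False by (simp add: push_def reduced_Cons)
    qed (use r Cons False in \<open>simp add: push_def\<close>)
  qed (use r in \<open>simp add: push_def\<close>)
qed (simp add: push_def)

lemma push_cmp:
  assumes r: "reduced C ws" and c: "composable C x y"
  shows "push C x (push C y ws) = push C (cmp C x y) ws"
proof (cases "is_identity C y")
  case True then show ?thesis using c by (simp add: push_id id_right)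
next
  case ny: False
  show ?thesis
  proof (cases "is_identity C x")
    case True then show ?thesis using c by (simp add: push_id id_left)
  next
    case nx: False
    have nxy: "\<not> is_identity C (cmp C x y)" using con_l[OF c] nx by blast
    show ?thesis
    proof (cases ws)
      case Nil then show ?thesis using nx ny nxy c by (simp add: push_def)
    next
      case (Cons w ws')
      show ?thesis
      proof (cases "composable C y w")
        case True
        have c2: "composable C x (cmp C y w)" using c True cC[OF True] comp_arr[OF c]
          by (simp add: composable_def)
        have n2: "\<not> is_identity C (cmp C y w)" using con_l[OF True] ny by blast
        have c3: "composable C (cmp C x y) w" using c True cC[OF c] comp_arr[OF True]
          by (simp add: composable_def)
        show ?thesis using Cons True c2 n2 c3 nx ny nxy cA[OF c True] by (simp add: push_def)
      next
        case False
        have "\<not> composable C (cmp C x y) w" using False cC[OF c] comp_arr[OF c]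
          by (auto simp: composable_def)
        then show ?thesis using Cons False c nx ny nxy by (simp add: push_def)
      qed
    qed
  qed
qed

lemma red_reduced: "reduced C (red C xs)"
  by (induction xs) (simp_all add: red_Cons push_reduced)

lemma reduced_red: "reduced C ws \<Longrightarrow> red C ws = ws"
proof (induction ws)
  case (Cons w ws)
  then have "reduced C ws" by (simp add: reduced_Cons)
  with Cons show ?case by (cases ws) (simp_all add: red_Cons push_def)
qed simp

lemma pcong_red: "pcong (urel C) xs ys \<Longrightarrow> red C xs = red C ys"
proof (induction rule: pcong.induct)
  case (rel l r xs ys)
  have "foldr (push C) l (red C ys) = foldr (push C) r (red C ys)"
    using rel red_reduced[of ys] by (auto simp: urel_def push_id push_cmp)
  then show ?case by (simp add: red_append)
qed auto

lemma pcong_iff_red: "pcong (urel C) xs ys \<longleftrightarrow> red C xs = red C ys"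
proof
  assume "red C xs = red C ys"
  then show "pcong (urel C) xs ys"
    using pcong_to_red[of C xs] pcong_to_red[of C ys] by (metis pcong.sym pcong.trans)
qed (rule pcong_red)

lemma red_app_Nil: "red C (a @ b) = [] \<Longrightarrow> red C a = []"
  using foldr_push_Nil[of C a "red C b"] by (simp add: red_append red_def)

lemma conical_umon: "conical (umon C)"
  unfolding conical_def umon_eq
proof (intro allI impI)
  fix X Y assume h: "composable (pres_monoid (arr C) (urel C)) X Y \<and>
       is_identity (pres_monoid (arr C) (urel C)) (cmp (pres_monoid (arr C) (urel C)) X Y)"
  then obtain a b where "X = pclass (urel C) a" "Y = pclass (urel C) b"
    by (auto simp: pm_composable pm_simps)
  with h have "pcong (urel C) (a @ b) []" by (simp add: pm_cmp pm_is_identity pclass_eq_iff)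
  then have "red C a = []" using red_app_Nil by (simp add: pcong_iff_red)
  then show "is_identity (pres_monoid (arr C) (urel C)) X"
    using \<open>X = _\<close> by (simp add: pm_is_identity pclass_eq_iff pcong_iff_red)
qed

end

locale lccat = ccat +
  assumes lc: "left_cancellative C"
begin

lemma lcan: "composable C a x \<Longrightarrow> composable C a y \<Longrightarrow> cmp C a x = cmp C a y \<Longrightarrow> x = y"
  using lc unfolding left_cancellative_def by blast

lemma self_div: "composable C p q \<Longrightarrow> cmp C p q = p \<Longrightarrow> is_identity C q"
proof -
  assume c: "composable C p q" and e: "cmp C p q = p"
  have p: "p \<in> arr C" using c by (simp add: composable_def)
  have c2: "composable C p (tgt C p)" using p cS by (simp add: composable_def)
  have "cmp C p (tgt C p) = p" using p cS by simp
  then have "q = tgt C p" using lcan[OF c c2] e by simp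
  then show ?thesis using p tgt_id by simp
qed

lemma push_inj:
  assumes r1: "reduced C W" and r2: "reduced C W'" and e: "push C x W = push C x W'"
  shows "W = W'"
proof (cases "is_identity C x")
  case True then show ?thesis using e by (simp add: push_id)
next
  case nx: False
  show ?thesis
  proof (cases W)
    case Nil
    show ?thesis
    proof (cases W')
      case (Cons w' V')
      show ?thesis
      proof (cases "composable C x w'")
        case True
        then have "cmp C x w' = x" using e Nil Cons nx by (simp add: push_def)
        then have "is_identity C w'" using self_div True by blast
        then show ?thesis using r2 Cons by (simp add: reduced_Cons)
      qed (use e Nil Cons nx in \<open>simp add: push_def\<close>)
    qed (simp add: Nil)
  next
    case (Cons w V)
    note C1 = Cons
    show ?thesis
    proof (cases W')
      case Nil
      show ?thesis
      proof (cases "composable C x w")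
        case True
        then have "cmp C x w = x" using e Nil Cons nx by (simp add: push_def)
        then have "is_identity C w" using self_div True by blast
        then show ?thesis using r1 Cons by (simp add: reduced_Cons)
      qed (use e Nil Cons nx in \<open>simp add: push_def\<close>)
    next
      case (Cons w' V')
      note Cons' = Cons
      show ?thesis
      proof (cases "composable C x w")
        case c1: True
        show ?thesis
        proof (cases "composable C x w'")
          case True
          then have "cmp C x w = cmp C x w'" "V = V'" using e C1 Cons' nx c1 by (simp_all add: push_def)
          then show ?thesis using lcan[OF c1 True] C1 Cons' by simp
        next
          case False
          then have "cmp C x w = x" using e C1 Cons' nx c1 by (simp add: push_def)
          then have "is_identity C w" using self_div c1 by blast
          then show ?thesis using r1 C1 by (simp add: reduced_Cons)
        qed
      next
        case c1: False
        show ?thesis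
        proof (cases "composable C x w'")
          case True
          then have "cmp C x w' = x" using e C1 Cons' nx c1 by (simp add: push_def)
          then have "is_identity C w'" using self_div True by blast
          then show ?thesis using r2 Cons' by (simp add: reduced_Cons)
        next
          case False
          then show ?thesis using e C1 Cons' nx c1 by (simp add: push_def)
        qed
      qed
    qed
  qed
qed

lemma foldr_push_reduced: "reduced C W \<Longrightarrow> reduced C (foldr (push C) a W)"
  by (induction a) (simp_all add: push_reduced)

lemma foldr_push_inj: "reduced C W \<Longrightarrow> reduced C W' \<Longrightarrow> foldr (push C) a W = foldr (push C) a W' \<Longrightarrow> W = W'"
proof (induction a)
  case (Cons x a)
  have "reduced C (foldr (push C) a W)" "reduced C (foldr (push C) a W')"
    using Cons.prems by (simp_all add: foldr_push_reduced)
  with Cons show ?case using push_inj by simp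
qed simp

lemma wLC: "pcong (urel C) (a @ x) (a @ y) \<Longrightarrow> pcong (urel C) x y"
  using foldr_push_inj[OF red_reduced red_reduced] by (simp add: pcong_iff_red red_append)

lemma left_canc_umon: "left_cancellative (umon C)"
  unfolding umon_eq pm_left_canc using wLC by blast

end




definition sdiv :: "'c cat \<Rightarrow> 'c \<Rightarrow> 'c \<Rightarrow> bool" where
  "sdiv C p x \<longleftrightarrow> \<not> is_identity C p \<and> (\<exists>q. composable C p q \<and> cmp C p q = x \<and> \<not> is_identity C q)"

fun dvr :: "'c cat \<Rightarrow> 'c list \<Rightarrow> 'c list \<Rightarrow> bool" where
  "dvr C [] a = (a = [])"
| "dvr C (x # b) a = (a = [] \<or> (\<exists>p. a = [p] \<and> sdiv C p x) \<or> (\<exists>a'. a = x # a' \<and> dvr C b a'))"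

context ccat
begin

lemma push_noncomp: "\<not> is_identity C y \<Longrightarrow> W \<noteq> [] \<Longrightarrow> \<not> composable C y (hd W) \<Longrightarrow> push C y W = y # W"
  by (cases W) (auto simp: push_def)

lemma hd_red:
  assumes "a \<noteq> []" "reduced C a" "a \<in> lists (arr C)"
  shows "red C (a @ z) \<noteq> [] \<and> src C (hd (red C (a @ z))) = src C (hd a)"
  using assms
proof (induction a)
  case (Cons y a)
  show ?case
  proof (cases "a = []")
    case True
    have ny: "\<not> is_identity C y" using Cons.prems by (simp add: reduced_Cons)
    show ?thesis
    proof (cases "red C z")
      case Nil then show ?thesis using True ny by (simp add: red_Cons push_def)
    next
      case (Cons w W)
      show ?thesis
      proof (cases "composable C y w")
        case c: True
        then show ?thesis using True ny Cons cC(2)[OF c] by (simp add: red_Cons push_def)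
      qed (use True ny Cons in \<open>simp add: red_Cons push_def\<close>)
    qed
  next
    case False
    have r: "reduced C a" "\<not> is_identity C y" "\<not> composable C y (hd a)" using Cons.prems False
      by (auto simp: reduced_Cons)
    have IH: "red C (a @ z) \<noteq> [] \<and> src C (hd (red C (a @ z))) = src C (hd a)"
      using Cons.IH False r Cons.prems by simp
    have "hd a \<in> arr C" "y \<in> arr C" using Cons.prems False by (cases a; auto)+
    then have "\<not> composable C y (hd (red C (a @ z)))" using r(3) IH by (auto simp: composable_def)
    then have "red C ((y # a) @ z) = y # red C (a @ z)" using push_noncomp[OF r(2)] IH
      by (simp add: red_Cons)
    then show ?thesis by simp
  qed
qed simp

end

context lccat
begin

lemma sdiv_self: "\<not> sdiv C x x"
  using self_div unfolding sdiv_def by blast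

lemma sdiv_arr: "sdiv C p x \<Longrightarrow> p \<in> arr C \<and> src C p = src C x"
  unfolding sdiv_def using cC(2) comp_arr by fastforce

lemma dvr_Cons_same: "dvr C (x # b) (x # a) \<longleftrightarrow> dvr C b a"
  using sdiv_self by auto

lemma dvr_hd: "dvr C b a \<Longrightarrow> a \<noteq> [] \<Longrightarrow> b \<noteq> [] \<and> src C (hd a) = src C (hd b)"
  by (cases b) (auto dest: sdiv_arr)

lemma dvr_reduced: "reduced C b \<Longrightarrow> b \<in> lists (arr C) \<Longrightarrow> dvr C b a \<Longrightarrow> reduced C a \<and> a \<in> lists (arr C)"
proof (induction b arbitrary: a)
  case (Cons x b)
  from Cons.prems(3) consider "a = []" | p where "a = [p]" "sdiv C p x" | a' where "a = x # a'" "dvr C b a'"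
    by auto
  then show ?case
  proof cases
    case 2 then show ?thesis using sdiv_arr[OF 2(2)] by (auto simp: sdiv_def)
  next
    case 3
    have rb: "reduced C b" "\<not> is_identity C x" "b \<noteq> [] \<longrightarrow> \<not> composable C x (hd b)"
      using Cons.prems by (auto simp: reduced_Cons)
    have IH: "reduced C a' \<and> a' \<in> lists (arr C)" using Cons.IH rb Cons.prems 3 by simp
    have "\<not> composable C x (hd a')" if "a' \<noteq> []"
    proof -
      have "b \<noteq> []" "src C (hd a') = src C (hd b)" using dvr_hd[OF 3(2) that] by auto
      moreover have "hd b \<in> arr C" using Cons.prems \<open>b \<noteq> []\<close> by (cases b) auto
      ultimately show ?thesis using rb by (auto simp: composable_def)
    qed
    then show ?thesis using IH rb 3 Cons.prems by (auto simp: reduced_Cons)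
  qed simp
qed simp

lemma dvr_to_red:
  assumes "reduced C b" "b \<in> lists (arr C)" "dvr C b a"
  shows "\<exists>z\<in>lists (arr C). red C (a @ z) = b"
  using assms
proof (induction b arbitrary: a)
  case Nil then show ?case by (intro bexI[of _ "[]"]) auto
next
  case (Cons x b)
  have rb: "reduced C b" "\<not> is_identity C x" "b \<noteq> [] \<longrightarrow> \<not> composable C x (hd b)" "x \<in> arr C" "b \<in> lists (arr C)"
    using Cons.prems by (auto simp: reduced_Cons)
  have px: "push C x b = x # b" using rb by (cases b) (auto simp: push_def)
  from Cons.prems(3) consider "a = []" | p where "a = [p]" "sdiv C p x" | a' where "a = x # a'" "dvr C b a'"
    by auto
  then show ?case
  proof cases
    case 1 then show ?thesis using Cons.prems reduced_red by (intro bexI[of _ "x # b"]) auto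
  next
    case 2
    obtain q where q: "composable C p q" "cmp C p q = x" "\<not> is_identity C q" "\<not> is_identity C p"
      using 2(2) by (auto simp: sdiv_def)
    have tq: "tgt C q = tgt C x" using cC(3)[OF q(1)] q(2) by simp
    have qa: "q \<in> arr C" using q(1) by (simp add: composable_def)
    have "reduced C (q # b)"
    proof -
      have "\<not> composable C q (hd b)" if "b \<noteq> []"
        using rb that tq qa by (auto simp: composable_def)
      then show ?thesis using rb q by (auto simp: reduced_Cons)
    qed
    then have "red C (q # b) = q # b" by (rule reduced_red)
    then have "red C ([p] @ (q # b)) = x # b" using q by (simp add: red_Cons push_def)
    then show ?thesis using 2 qa rb by (intro bexI[of _ "q # b"]) auto
  next
    case 3
    then obtain z where z: "z \<in> lists (arr C)" "red C (a' @ z) = b" using Cons.IH rb by blast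
    then have "red C (a @ z) = x # b" using 3 px by (simp add: red_Cons)
    then show ?thesis using z by blast
  qed
qed

lemma red_to_dvr:
  assumes "reduced C a" "a \<in> lists (arr C)" "z \<in> lists (arr C)"
  shows "dvr C (red C (a @ z)) a"
  using assms
proof (induction a)
  case Nil then show ?case by (cases "red C ([] @ z)") auto
next
  case (Cons y a)
  have ra: "reduced C a" "\<not> is_identity C y" "a \<noteq> [] \<longrightarrow> \<not> composable C y (hd a)" "y \<in> arr C" "a \<in> lists (arr C)"
    using Cons.prems by (auto simp: reduced_Cons)
  show ?case
  proof (cases "a = []")
    case True
    have rz: "reduced C (red C z)" by (rule red_reduced)
    show ?thesis
    proof (cases "red C z")
      case Nil then show ?thesis using True ra by (simp add: red_Cons push_def)
    next
      case (Cons w W)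
      show ?thesis
      proof (cases "composable C y w")
        case c: True
        have "\<not> is_identity C w" using rz Cons by (simp add: reduced_Cons)
        then have "sdiv C y (cmp C y w)" using c ra by (auto simp: sdiv_def)
        then show ?thesis using True ra Cons c by (simp add: red_Cons push_def)
      next
        case False
        then show ?thesis using True ra Cons by (simp add: red_Cons push_def)
      qed
    qed
  next
    case False
    have IH: "dvr C (red C (a @ z)) a" using Cons.IH ra Cons.prems by simp
    have h: "red C (a @ z) \<noteq> [] \<and> src C (hd (red C (a @ z))) = src C (hd a)"
      using hd_red[OF False ra(1) ra(5)] .
    have "hd a \<in> arr C" using ra(5) False by (cases a) auto
    then have "\<not> composable C y (hd (red C (a @ z)))" using ra(3) False h ra(4)
      by (auto simp: composable_def)
    then have "red C ((y # a) @ z) = y # red C (a @ z)" using push_noncomp[OF ra(2)] h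
      by (simp add: red_Cons)
    then show ?thesis using IH by simp
  qed
qed

lemma wLD_iff:
  assumes "a \<in> lists (arr C)" "b \<in> lists (arr C)"
  shows "wLD (urel C) (arr C) a b \<longleftrightarrow> dvr C (red C b) (red C a)"
proof -
  have e: "red C (a @ z) = red C (red C a @ z)" for z
  proof -
    have "pcong (urel C) ([] @ a @ z) ([] @ red C a @ z)" by (rule pcong_ctx[OF pcong_to_red])
    then show ?thesis by (simp add: pcong_iff_red)
  qed
  have ra: "reduced C (red C a)" "red C a \<in> lists (arr C)" "reduced C (red C b)" "red C b \<in> lists (arr C)"
    using assms by (simp_all add: red_reduced red_lists)
  show ?thesis
  proof
    assume "wLD (urel C) (arr C) a b"
    then obtain z where z: "z \<in> lists (arr C)" "red C (a @ z) = red C b"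
      by (auto simp: wLD_def pcong_iff_red)
    then show "dvr C (red C b) (red C a)" using red_to_dvr[OF ra(1,2) z(1)] e by simp
  next
    assume "dvr C (red C b) (red C a)"
    then obtain z where "z \<in> lists (arr C)" "red C (red C a @ z) = red C b"
      using dvr_to_red[OF ra(3,4)] reduced_red[OF ra(3)] by metis
    then show "wLD (urel C) (arr C) a b" using e by (auto simp: wLD_def pcong_iff_red)
  qed
qed

lemma ldiv_cases: "ldiv C p x \<Longrightarrow> \<not> is_identity C p \<Longrightarrow> p = x \<or> sdiv C p x"
proof -
  assume "ldiv C p x" "\<not> is_identity C p"
  then obtain q where q: "composable C p q" "x = cmp C p q" unfolding ldiv_def by blast
  show ?thesis
  proof (cases "is_identity C q")
    case True then show ?thesis using id_right[OF q(1)] q by simp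
  next
    case False then show ?thesis using q \<open>\<not> is_identity C p\<close> unfolding sdiv_def by blast
  qed
qed

lemma sdiv_ldiv: "sdiv C p x \<Longrightarrow> ldiv C p x"
  unfolding ldiv_def sdiv_def by auto

lemma ldiv_refl: "x \<in> arr C \<Longrightarrow> ldiv C x x"
  unfolding ldiv_def using cS[of x] by (auto simp: composable_def intro!: exI[of _ "tgt C x"])

lemma ldiv_src: "ldiv C p x \<Longrightarrow> src C p = src C x"
  unfolding ldiv_def using cC(2) by auto

lemma ldiv_arr: "ldiv C p x \<Longrightarrow> p \<in> arr C \<and> x \<in> arr C"
  unfolding ldiv_def using cC(1) comp_arr by auto

lemma ldiv_nonid: "ldiv C p x \<Longrightarrow> \<not> is_identity C p \<Longrightarrow> \<not> is_identity C x"
  unfolding ldiv_def using con_l by blast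

end

definition cg :: "'c cat \<Rightarrow> 'c \<Rightarrow> 'c \<Rightarrow> 'c" where
  "cg C x y = (SOME d. d \<in> arr C \<and> ldiv C d x \<and> ldiv C d y \<and> (\<forall>c\<in>arr C. ldiv C c x \<and> ldiv C c y \<longrightarrow> ldiv C c d))"

fun gcdw :: "'c cat \<Rightarrow> 'c list \<Rightarrow> 'c list \<Rightarrow> 'c list" where
  "gcdw C (x # b) (y # c) = (if x = y then x # gcdw C b c
      else if src C x = src C y \<and> \<not> is_identity C (cg C x y) then [cg C x y] else [])"
| "gcdw C _ _ = []"

locale lgcat = lccat +
  assumes lg: "has_left_gcds C"
begin

lemma cg_prop:
  assumes "x \<in> arr C" "y \<in> arr C" "src C x = src C y"
  shows "cg C x y \<in> arr C \<and> ldiv C (cg C x y) x \<and> ldiv C (cg C x y) y \<and>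
    (\<forall>c\<in>arr C. ldiv C c x \<and> ldiv C c y \<longrightarrow> ldiv C c (cg C x y))"
proof -
  have "\<exists>d. d \<in> arr C \<and> ldiv C d x \<and> ldiv C d y \<and> (\<forall>c\<in>arr C. ldiv C c x \<and> ldiv C c y \<longrightarrow> ldiv C c d)"
    using lg assms unfolding has_left_gcds_def by blast
  then show ?thesis unfolding cg_def by (rule someI_ex)
qed

lemma dvr_Nil[simp]: "dvr C b []"
  by (cases b) auto

lemma dvr_single: "x \<in> arr C \<Longrightarrow> \<not> is_identity C x \<Longrightarrow> ldiv C g x \<Longrightarrow> \<not> is_identity C g \<Longrightarrow> dvr C (x # b) [g]"
  using ldiv_cases by auto

lemma gcdw_prop:
  assumes "reduced C b" "b \<in> lists (arr C)" "reduced C c" "c \<in> lists (arr C)"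
  shows "dvr C b (gcdw C b c) \<and> dvr C c (gcdw C b c) \<and> (\<forall>a. dvr C b a \<and> dvr C c a \<longrightarrow> dvr C (gcdw C b c) a)"
  using assms
proof (induction b arbitrary: c)
  case Nil then show ?case by simp
next
  case (Cons x b cc)
  note IHo = Cons.IH and Po = Cons.prems
  show ?case
  proof (cases cc)
    case Nil then show ?thesis by simp
  next
  case Cc: (Cons y c)
  have CC: "cc = y # c" by (rule Cc)
  have rb: "reduced C b" "\<not> is_identity C x" "x \<in> arr C" "b \<in> lists (arr C)"
    and rc: "reduced C c" "\<not> is_identity C y" "y \<in> arr C" "c \<in> lists (arr C)"
    using Po Cc by (auto simp: reduced_Cons)
  show ?thesis
  proof (cases "x = y")
    case True
    have IH: "dvr C b (gcdw C b c) \<and> dvr C c (gcdw C b c) \<and> (\<forall>a. dvr C b a \<and> dvr C c a \<longrightarrow> dvr C (gcdw C b c) a)"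
      using IHo[of c] rb rc by simp
    have "dvr C (gcdw C (x # b) (x # c)) a" if "dvr C (x # b) a" "dvr C (x # c) a" for a
    proof -
      from that(1) consider "a = []" | p where "a = [p]" "sdiv C p x" | a' where "a = x # a'" "dvr C b a'"
        by auto
      then show ?thesis
      proof cases
        case 3
        then have "dvr C c a'" using that(2) dvr_Cons_same by simp
        then show ?thesis using 3 IH by simp
      qed auto
    qed
    then show ?thesis using IH True CC by simp
  next
    case ne: False
    show ?thesis
    proof (cases "src C x = src C y \<and> \<not> is_identity C (cg C x y)")
      case True
      define g where "g = cg C x y"
      have gp: "g \<in> arr C" "ldiv C g x" "ldiv C g y" "\<forall>c\<in>arr C. ldiv C c x \<and> ldiv C c y \<longrightarrow> ldiv C c g"
        "\<not> is_identity C g"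
        using cg_prop[OF rb(3) rc(3)] True unfolding g_def by auto
      have G: "gcdw C (x # b) (y # c) = [g]" using ne True by (simp add: g_def)
      have d1: "dvr C (x # b) [g]" by (rule dvr_single[OF rb(3) rb(2) gp(2) gp(5)])
      have d2: "dvr C (y # c) [g]" by (rule dvr_single[OF rc(3) rc(2) gp(3) gp(5)])
      have "dvr C [g] a" if a1: "dvr C (x # b) a" and a2: "dvr C (y # c) a" for a
      proof -
        have key: "dvr C [g] [p]" if "p \<in> arr C" "ldiv C p x" "ldiv C p y" "\<not> is_identity C p" for p
        proof -
          have "ldiv C p g" using gp(4) that(1,2,3) by blast
          then show ?thesis using dvr_single[OF gp(1) gp(5) _ that(4), of "[]"] by simp
        qed
        from a1 consider "a = []" | p where "a = [p]" "sdiv C p x" | a' where "a = x # a'" "dvr C b a'"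
          by auto
        then show ?thesis
        proof cases
          case 1 then show ?thesis by simp
        next
          case A: 2
          have pa: "p \<in> arr C" "ldiv C p x" "\<not> is_identity C p"
            using sdiv_arr[OF A(2)] sdiv_ldiv[OF A(2)] A(2) unfolding sdiv_def by blast+
          from a2 consider "a = []" | p' where "a = [p']" "sdiv C p' y" | a'' where "a = y # a''" "dvr C c a''"
            by auto
          then show ?thesis
          proof cases
            case 1 then show ?thesis using A by simp
          next
            case 2
            then have "ldiv C p y" using A sdiv_ldiv by simp
            then show ?thesis using key[OF pa(1,2) _ pa(3)] A by simp
          next
            case 3
            then have "p = y" using A by simp
            then have "ldiv C p y" using ldiv_refl rc(3) by simp
            then show ?thesis using key[OF pa(1,2) _ pa(3)] A by simp
          qed
        next
          case B: 3
          from a2 consider "a = []" | p' where "a = [p']" "sdiv C p' y" | a'' where "a = y # a''" "dvr C c a''"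
            by auto
          then show ?thesis
          proof cases
            case 1 then show ?thesis using B by simp
          next
            case 2
            then have "p' = x" "a' = []" using B by simp_all
            then have "ldiv C x y" using 2 sdiv_ldiv by simp
            then show ?thesis using key[OF rb(3) ldiv_refl[OF rb(3)] _ rb(2)] B \<open>a' = []\<close> by simp
          next
            case 3 then show ?thesis using B ne by simp
          qed
        qed
      qed
      then show ?thesis using G d1 d2 CC by simp
    next
      case False
      have G: "gcdw C (x # b) (y # c) = []" using ne False by simp
      have "a = []" if a1: "dvr C (x # b) a" and a2: "dvr C (y # c) a" for a
      proof (rule ccontr)
        assume an: "a \<noteq> []"
        have s1: "src C (hd a) = src C x" and s2: "src C (hd a) = src C y"
          using dvr_hd[OF a1 an] dvr_hd[OF a2 an] by auto
        have cgp: "cg C x y \<in> arr C" "\<forall>c\<in>arr C. ldiv C c x \<and> ldiv C c y \<longrightarrow> ldiv C c (cg C x y)"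
          using cg_prop[OF rb(3) rc(3)] s1 s2 by auto
        have ni: "is_identity C (cg C x y)" using False s1 s2 by simp
        have bad: "\<not> (p \<in> arr C \<and> ldiv C p x \<and> ldiv C p y \<and> \<not> is_identity C p)" for p
        proof
          assume h: "p \<in> arr C \<and> ldiv C p x \<and> ldiv C p y \<and> \<not> is_identity C p"
          then have "ldiv C p (cg C x y)" using cgp(2) by blast
          then show False using ldiv_nonid ni h by blast
        qed
        from a1 consider p where "a = [p]" "sdiv C p x" | a' where "a = x # a'" "dvr C b a'"
          using an by auto
        then show False
        proof cases
          case A: 1
          have pa: "p \<in> arr C" "ldiv C p x" "\<not> is_identity C p"
            using sdiv_arr[OF A(2)] sdiv_ldiv[OF A(2)] A(2) unfolding sdiv_def by blast+
          from a2 an consider p' where "a = [p']" "sdiv C p' y" | a'' where "a = y # a''" "dvr C c a''"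
            by auto
          then show False
          proof cases
            case 1
            then have "ldiv C p y" using A sdiv_ldiv by simp
            then show False using bad pa by blast
          next
            case 2
            then have "p = y" using A by simp
            then show False using bad pa ldiv_refl[OF rc(3)] by blast
          qed
        next
          case B: 2
          from a2 an consider p' where "a = [p']" "sdiv C p' y" | a'' where "a = y # a''" "dvr C c a''"
            by auto
          then show False
          proof cases
            case 1
            then have "p' = x" using B by simp
            then have "ldiv C x y" using 1 sdiv_ldiv by simp
            then show False using bad rb(2,3) ldiv_refl[OF rb(3)] by blast
          next
            case 2 then show False using B ne by simp
          qed
        qed
      qed
      note H = this
      show ?thesis unfolding CC G
      proof (intro conjI allI impI)
        fix a assume "dvr C (x # b) a \<and> dvr C (y # c) a"
        then have "a = []" using H by blast
        then show "dvr C [] a" by simp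
      qed simp_all
    qed
  qed
  qed
qed

lemma gcdw_Nil_cases: "dvr C (x # b) []" by simp

lemma wLG: "\<forall>b\<in>lists (arr C). \<forall>c\<in>lists (arr C). \<exists>d\<in>lists (arr C). wLD (urel C) (arr C) d b \<and> wLD (urel C) (arr C) d c \<and>
      (\<forall>a\<in>lists (arr C). wLD (urel C) (arr C) a b \<and> wLD (urel C) (arr C) a c \<longrightarrow> wLD (urel C) (arr C) a d)"
proof (intro ballI)
  fix b c assume b: "b \<in> lists (arr C)" and c: "c \<in> lists (arr C)"
  define d where "d = gcdw C (red C b) (red C c)"
  have rb: "reduced C (red C b)" "red C b \<in> lists (arr C)" "reduced C (red C c)" "red C c \<in> lists (arr C)"
    using b c by (simp_all add: red_reduced red_lists)
  note P = gcdw_prop[OF rb, folded d_def]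
  have rd: "reduced C d" "d \<in> lists (arr C)" using dvr_reduced[OF rb(1,2)] P by auto
  have rdd: "red C d = d" using rd by (simp add: reduced_red)
  show "\<exists>d\<in>lists (arr C). wLD (urel C) (arr C) d b \<and> wLD (urel C) (arr C) d c \<and>
      (\<forall>a\<in>lists (arr C). wLD (urel C) (arr C) a b \<and> wLD (urel C) (arr C) a c \<longrightarrow> wLD (urel C) (arr C) a d)"
    using P rd rdd b c by (intro bexI[of _ d]) (simp_all add: wLD_iff)
qed

lemma left_gcds_umon: "has_left_gcds (umon C)"
  unfolding umon_eq pm_left_gcds using wLG by blast

end




definition opc :: "'c cat \<Rightarrow> 'c cat" where
  "opc C = \<lparr>arr = arr C, src = tgt C, tgt = src C, cmp = (\<lambda>x y. cmp C y x)\<rparr>"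

lemma opc_simps[simp]: "arr (opc C) = arr C" "src (opc C) = tgt C" "tgt (opc C) = src C"
  "cmp (opc C) x y = cmp C y x"
  by (simp_all add: opc_def)

lemma opc_composable: "composable (opc C) x y \<longleftrightarrow> composable C y x"
  by (auto simp: composable_def)

lemma opc_ldiv: "ldiv (opc C) a b \<longleftrightarrow> rdiv C a b"
  by (simp add: ldiv_def rdiv_def opc_composable)

lemma opc_rdiv: "rdiv (opc C) a b \<longleftrightarrow> ldiv C a b"
  by (simp add: ldiv_def rdiv_def opc_composable)

lemma opc_left_gcds: "has_left_gcds (opc C) \<longleftrightarrow> has_right_gcds C"
  by (simp add: has_left_gcds_def has_right_gcds_def opc_ldiv)

lemma opc_right_gcds: "has_right_gcds (opc C) \<longleftrightarrow> has_left_gcds C"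
  by (simp add: has_left_gcds_def has_right_gcds_def opc_rdiv)

lemma opc_lc: "left_cancellative (opc C) \<longleftrightarrow> right_cancellative C"
  by (simp add: left_cancellative_def right_cancellative_def opc_composable)

lemma opc_rc: "right_cancellative (opc C) \<longleftrightarrow> left_cancellative C"
  by (simp add: left_cancellative_def right_cancellative_def opc_composable)

lemma cat_facts:
  assumes "category C"
  shows "\<And>x. x \<in> arr C \<Longrightarrow> src C x \<in> arr C \<and> tgt C x \<in> arr C
        \<and> src C (src C x) = src C x \<and> tgt C (src C x) = src C x
        \<and> src C (tgt C x) = tgt C x \<and> tgt C (tgt C x) = tgt C x
        \<and> cmp C (src C x) x = x \<and> cmp C x (tgt C x) = x"
    and "\<And>x y. composable C x y \<Longrightarrow>
        cmp C x y \<in> arr C \<and> src C (cmp C x y) = src C x \<and> tgt C (cmp C x y) = tgt C y"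
    and "\<And>x y z. composable C x y \<Longrightarrow> composable C y z \<Longrightarrow>
        cmp C (cmp C x y) z = cmp C x (cmp C y z)"
  using assms unfolding category_def by blast+

lemma category_opc:
  assumes cat: "category C"
  shows "category (opc C)"
  unfolding category_def
proof (intro conjI ballI allI impI)
  fix x assume x: "x \<in> arr (opc C)"
  note f = cat_facts(1)[OF cat, of x]
  show "src (opc C) x \<in> arr (opc C)" "tgt (opc C) x \<in> arr (opc C)"
    "src (opc C) (src (opc C) x) = src (opc C) x" "tgt (opc C) (src (opc C) x) = src (opc C) x"
    "src (opc C) (tgt (opc C) x) = tgt (opc C) x" "tgt (opc C) (tgt (opc C) x) = tgt (opc C) x"
    "cmp (opc C) (src (opc C) x) x = x" "cmp (opc C) x (tgt (opc C) x) = x"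
    using x f by simp_all
next
  fix x y assume "composable (opc C) x y"
  then have c: "composable C y x" by (simp add: opc_composable)
  note f = cat_facts(2)[OF cat c]
  show "cmp (opc C) x y \<in> arr (opc C)" "src (opc C) (cmp (opc C) x y) = src (opc C) x"
    "tgt (opc C) (cmp (opc C) x y) = tgt (opc C) y" using f by simp_all
next
  fix x y z assume "composable (opc C) x y \<and> composable (opc C) y z"
  then have "composable C y x" "composable C z y" by (simp_all add: opc_composable)
  then show "cmp (opc C) (cmp (opc C) x y) z = cmp (opc C) x (cmp (opc C) y z)"
    using cat_facts(3)[OF cat] by simp
qed

context ccat
begin

lemma opc_is_identity: "is_identity (opc C) e \<longleftrightarrow> is_identity C e"
proof
  assume "is_identity (opc C) e"
  then have "e \<in> arr C" "tgt C e = e" by (simp_all add: is_identity_def)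
  then show "is_identity C e" using cS(5)[of e] by (simp add: is_identity_def)
qed (simp add: is_identity_def id_tgt)

lemma conical_opc: "conical (opc C)"
  unfolding conical_def
proof (intro allI impI)
  fix x y assume "composable (opc C) x y \<and> is_identity (opc C) (cmp (opc C) x y)"
  then have "composable C y x" "is_identity C (cmp C y x)" by (simp_all add: opc_composable opc_is_identity)
  then have "is_identity C x" by (rule con_r)
  then show "is_identity (opc C) x" by (simp add: opc_is_identity)
qed

lemma ccat_opc: "ccat (opc C)"
  by (simp add: ccat_def category_opc[OF cat] conical_opc)

definition "revp = (\<lambda>(l :: 'c list, r :: 'c list). (rev l, rev r))"

lemma urel_opc: "urel (opc C) = revp ` urel C"
proof (intro set_eqI iffI)
  fix p assume "p \<in> urel (opc C)"
  then consider e where "p = ([e], [])" "is_identity C e" | x y where "p = ([x, y], [cmp C y x])" "composable C y x"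
    unfolding urel_def by (auto simp: opc_is_identity opc_composable)
  then show "p \<in> revp ` urel C"
  proof cases
    case 1
    then have "([e], []) \<in> urel C" by (auto simp: urel_def)
    then show ?thesis using 1 by (force simp: revp_def)
  next
    case 2
    then have "([y, x], [cmp C y x]) \<in> urel C" by (auto simp: urel_def)
    then show ?thesis using 2 by (force simp: revp_def)
  qed
next
  fix p assume "p \<in> revp ` urel C"
  then obtain q where "q \<in> urel C" "p = revp q" by auto
  then consider e where "p = ([e], [])" "is_identity C e" | x y where "p = ([y, x], [cmp C x y])" "composable C x y"
    unfolding urel_def revp_def by auto
  then show "p \<in> urel (opc C)"
    by cases (auto simp: urel_def opc_is_identity opc_composable)
qed

lemma revp_revp: "revp ` revp ` R = R"
  by (force simp: revp_def image_image)

lemma pcong_opc: "pcong (urel (opc C)) xs ys \<longleftrightarrow> pcong (urel C) (rev xs) (rev ys)"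
proof
  assume "pcong (urel (opc C)) xs ys"
  from pcong_rev[OF this] show "pcong (urel C) (rev xs) (rev ys)"
    by (simp add: urel_opc revp_revp[unfolded revp_def] revp_def)
next
  assume "pcong (urel C) (rev xs) (rev ys)"
  from pcong_rev[OF this] show "pcong (urel (opc C)) xs ys"
    by (simp add: urel_opc revp_def)
qed

lemma wRD_opc: "wRD (urel C) (arr C) a b \<longleftrightarrow> wLD (urel (opc C)) (arr C) (rev a) (rev b)"
proof
  assume "wRD (urel C) (arr C) a b"
  then obtain z where "z \<in> lists (arr C)" "pcong (urel C) (z @ a) b" by (auto simp: wRD_def)
  then show "wLD (urel (opc C)) (arr C) (rev a) (rev b)"
    unfolding wLD_def by (intro bexI[of _ "rev z"]) (auto simp: pcong_opc)
next
  assume "wLD (urel (opc C)) (arr C) (rev a) (rev b)"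
  then obtain z where "z \<in> lists (arr C)" "pcong (urel (opc C)) (rev a @ z) (rev b)" by (auto simp: wLD_def)
  then show "wRD (urel C) (arr C) a b"
    unfolding wRD_def by (intro bexI[of _ "rev z"]) (auto simp: pcong_opc)
qed

end

lemma gcd_umon:
  assumes "gcd_category C"
  shows "gcd_monoid (umon C)"
proof -
  have cat: "category C" and con: "conical C" and lc: "left_cancellative C" and rc: "right_cancellative C"
    and lg: "has_left_gcds C" and rg: "has_right_gcds C"
    using assms by (simp_all add: gcd_category_def)
  interpret L: lgcat C using cat con lc lg by (simp add: lgcat_def lccat_def lgcat_axioms_def lccat_axioms_def ccat_def)
  have oc: "ccat (opc C)" by (rule L.ccat_opc)
  interpret R: lgcat "opc C" using oc rc rg
    by (simp add: lgcat_def lccat_def lgcat_axioms_def lccat_axioms_def opc_lc opc_left_gcds)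
  have "right_cancellative (umon C)"
    unfolding umon_eq pm_right_canc
  proof (intro ballI impI)
    fix a x y assume "pcong (urel C) (x @ a) (y @ a)"
    then have "pcong (urel (opc C)) (rev a @ rev x) (rev a @ rev y)" by (simp add: L.pcong_opc)
    then have "pcong (urel (opc C)) (rev x) (rev y)" by (rule R.wLC)
    then show "pcong (urel C) x y" by (simp add: L.pcong_opc)
  qed
  moreover have "has_right_gcds (umon C)"
    unfolding umon_eq pm_right_gcds
  proof (intro ballI)
    fix b c assume b: "b \<in> lists (arr C)" and c: "c \<in> lists (arr C)"
    then have rb: "rev b \<in> lists (arr (opc C))" and rcc: "rev c \<in> lists (arr (opc C))" by auto
    note ex = bspec[OF bspec[OF R.wLG rb] rcc]
    obtain d where d: "d \<in> lists (arr C)" "wLD (urel (opc C)) (arr C) d (rev b)" "wLD (urel (opc C)) (arr C) d (rev c)"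
      "\<forall>a\<in>lists (arr C). wLD (urel (opc C)) (arr C) a (rev b) \<and> wLD (urel (opc C)) (arr C) a (rev c) \<longrightarrow> wLD (urel (opc C)) (arr C) a d"
      using ex by auto
    show "\<exists>d\<in>lists (arr C). wRD (urel C) (arr C) d b \<and> wRD (urel C) (arr C) d c \<and>
      (\<forall>a\<in>lists (arr C). wRD (urel C) (arr C) a b \<and> wRD (urel C) (arr C) a c \<longrightarrow> wRD (urel C) (arr C) a d)"
    proof (intro bexI[of _ "rev d"] conjI ballI impI)
      show "rev d \<in> lists (arr C)" using d by auto
      show "wRD (urel C) (arr C) (rev d) b" "wRD (urel C) (arr C) (rev d) c" using d by (simp_all add: L.wRD_opc)
      fix a assume "a \<in> lists (arr C)" "wRD (urel C) (arr C) a b \<and> wRD (urel C) (arr C) a c"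
      moreover have "rev a \<in> lists (arr C)" using \<open>a \<in> lists (arr C)\<close> by auto
      ultimately show "wRD (urel C) (arr C) a (rev d)" using d(4)[rule_format, of "rev a"] by (simp add: L.wRD_opc)
    qed
  qed
  ultimately show ?thesis
    using L.conical_umon L.left_canc_umon L.left_gcds_umon
    by (simp add: gcd_monoid_def gcd_category_def umon_eq category_pm pm_unique_id)
qed




context lccat
begin

lemma red_single: "\<not> is_identity C x \<Longrightarrow> red C [x] = [x]"
  by (simp add: reduced_red)

lemma ldiv_src_id: "x \<in> arr C \<Longrightarrow> ldiv C (src C x) x"
  unfolding ldiv_def using cS[of x] by (auto simp: composable_def intro!: exI[of _ x])

lemma left_gcds_from_umon:
  assumes H: "has_left_gcds (umon C)"
  shows "has_left_gcds C"
  unfolding has_left_gcds_def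
proof (intro ballI impI)
  fix x y assume x: "x \<in> arr C" and y: "y \<in> arr C" and s: "src C x = src C y"
  show "\<exists>d\<in>arr C. ldiv C d x \<and> ldiv C d y \<and> (\<forall>c\<in>arr C. ldiv C c x \<and> ldiv C c y \<longrightarrow> ldiv C c d)"
  proof (cases "is_identity C x")
    case True
    then have "x = src C y" using s by (simp add: is_identity_def)
    then have "ldiv C x y" using ldiv_src_id[OF y] by simp
    then show ?thesis using x ldiv_refl[OF x] by blast
  next
    case nx: False
    show ?thesis
    proof (cases "is_identity C y")
      case True
      then have "y = src C x" using s by (simp add: is_identity_def)
      then have "ldiv C y x" using ldiv_src_id[OF x] by simp
      then show ?thesis using y ldiv_refl[OF y] by blast
    next
      case ny: False
      have W: "\<forall>b\<in>lists (arr C). \<forall>c\<in>lists (arr C). \<exists>d\<in>lists (arr C). wLD (urel C) (arr C) d b \<and> wLD (urel C) (arr C) d c \<and>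
        (\<forall>a\<in>lists (arr C). wLD (urel C) (arr C) a b \<and> wLD (urel C) (arr C) a c \<longrightarrow> wLD (urel C) (arr C) a d)"
        using H unfolding umon_eq pm_left_gcds .
      have xl: "[x] \<in> lists (arr C)" and yl: "[y] \<in> lists (arr C)" using x y by auto
      obtain dw where dw: "dw \<in> lists (arr C)" "wLD (urel C) (arr C) dw [x]" "wLD (urel C) (arr C) dw [y]"
        "\<forall>a\<in>lists (arr C). wLD (urel C) (arr C) a [x] \<and> wLD (urel C) (arr C) a [y] \<longrightarrow> wLD (urel C) (arr C) a dw"
        using bspec[OF bspec[OF W xl] yl] by blast
      define dd where "dd = red C dw"
      have d1: "dvr C [x] dd" using dw(2) wLD_iff[OF dw(1) xl] red_single[OF nx] by (simp add: dd_def)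
      have d2: "dvr C [y] dd" using dw(3) wLD_iff[OF dw(1) yl] red_single[OF ny] by (simp add: dd_def)
      have dx: "dd = [] \<or> (\<exists>p. dd = [p] \<and> ldiv C p x)"
        using d1 sdiv_ldiv ldiv_refl[OF x] by auto
      have dy: "dd = [] \<or> (\<exists>p. dd = [p] \<and> ldiv C p y)"
        using d2 sdiv_ldiv ldiv_refl[OF y] by auto
      define g where "g = (if dd = [] then src C x else hd dd)"
      have g: "g \<in> arr C" "ldiv C g x" "ldiv C g y"
      proof -
        have "g \<in> arr C \<and> ldiv C g x \<and> ldiv C g y"
        proof (cases "dd = []")
          case True
          then show ?thesis using ldiv_src_id[OF x] ldiv_src_id[OF y] s cS(1)[OF x] by (simp add: g_def)
        next
          case False
          then obtain p where "dd = [p]" "ldiv C p x" using dx by auto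
          moreover have "ldiv C p y" using dy \<open>dd = [p]\<close> by auto
          ultimately show ?thesis using ldiv_arr by (simp add: g_def)
        qed
        then show "g \<in> arr C" "ldiv C g x" "ldiv C g y" by simp_all
      qed
      have "ldiv C c g" if c: "c \<in> arr C" "ldiv C c x" "ldiv C c y" for c
      proof (cases "is_identity C c")
        case True
        then have "c = src C x" using ldiv_src[OF c(2)] by (simp add: is_identity_def)
        moreover have "src C g = src C x" using ldiv_src[OF g(2)] .
        ultimately show ?thesis using ldiv_src_id[OF g(1)] by simp
      next
        case nc: False
        have "dvr C [x] [c]" "dvr C [y] [c]" using ldiv_cases[OF c(2) nc] ldiv_cases[OF c(3) nc] by auto
        moreover have cl: "[c] \<in> lists (arr C)" using c by simp
        ultimately have "wLD (urel C) (arr C) [c] [x]" "wLD (urel C) (arr C) [c] [y]"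
          using wLD_iff[OF cl xl] wLD_iff[OF cl yl] red_single[OF nx] red_single[OF ny] red_single[OF nc]
          by simp_all
        then have "wLD (urel C) (arr C) [c] dw" using dw(4) cl by blast
        then have "dvr C dd [c]" using wLD_iff[OF cl dw(1)] red_single[OF nc] by (simp add: dd_def)
        moreover have "dd \<noteq> []" using \<open>dvr C dd [c]\<close> by auto
        ultimately obtain p where "dd = [p]" "c = p \<or> sdiv C c p" using dx by auto
        then show ?thesis using sdiv_ldiv ldiv_refl[OF c(1)] by (auto simp: g_def)
      qed
      then show ?thesis using g by blast
    qed
  qed
qed

end

lemma right_gcds_from_umon:
  assumes "category C" "conical C" "right_cancellative C" "has_right_gcds (umon C)"
  shows "has_right_gcds C"
proof -
  interpret L: ccat C using assms by (simp add: ccat_def)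
  interpret R: lccat "opc C" using L.ccat_opc assms(3) by (simp add: lccat_def lccat_axioms_def opc_lc)
  have W: "\<forall>b\<in>lists (arr C). \<forall>c\<in>lists (arr C). \<exists>d\<in>lists (arr C). wRD (urel C) (arr C) d b \<and> wRD (urel C) (arr C) d c \<and>
        (\<forall>a\<in>lists (arr C). wRD (urel C) (arr C) a b \<and> wRD (urel C) (arr C) a c \<longrightarrow> wRD (urel C) (arr C) a d)"
    using assms(4) unfolding umon_eq pm_right_gcds .
  have "has_left_gcds (umon (opc C))"
    unfolding umon_eq pm_left_gcds opc_simps
  proof (intro ballI)
    fix b c assume b: "b \<in> lists (arr C)" and c: "c \<in> lists (arr C)"
    then have rb: "rev b \<in> lists (arr C)" and rc: "rev c \<in> lists (arr C)" by auto
    obtain d where d: "d \<in> lists (arr C)" "wRD (urel C) (arr C) d (rev b)" "wRD (urel C) (arr C) d (rev c)"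
        "\<forall>a\<in>lists (arr C). wRD (urel C) (arr C) a (rev b) \<and> wRD (urel C) (arr C) a (rev c) \<longrightarrow> wRD (urel C) (arr C) a d"
      using bspec[OF bspec[OF W rb] rc] by blast
    show "\<exists>d\<in>lists (arr C). wLD (urel (opc C)) (arr C) d b \<and> wLD (urel (opc C)) (arr C) d c \<and>
      (\<forall>a\<in>lists (arr C). wLD (urel (opc C)) (arr C) a b \<and> wLD (urel (opc C)) (arr C) a c \<longrightarrow> wLD (urel (opc C)) (arr C) a d)"
    proof (intro bexI[of _ "rev d"] conjI ballI impI)
      show "rev d \<in> lists (arr C)" using d by auto
      show "wLD (urel (opc C)) (arr C) (rev d) b" "wLD (urel (opc C)) (arr C) (rev d) c"
        using d(2,3) by (simp_all add: L.wRD_opc)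
      fix a assume a: "a \<in> lists (arr C)" "wLD (urel (opc C)) (arr C) a b \<and> wLD (urel (opc C)) (arr C) a c"
      then have "wRD (urel C) (arr C) (rev a) (rev b)" "wRD (urel C) (arr C) (rev a) (rev c)"
        by (simp_all add: L.wRD_opc)
      moreover have "rev a \<in> lists (arr C)" using a(1) by auto
      ultimately have "wRD (urel C) (arr C) (rev a) d" using d(4) by blast
      then show "wLD (urel (opc C)) (arr C) a (rev d)" by (simp add: L.wRD_opc)
    qed
  qed
  then have "has_left_gcds (opc C)" by (rule R.left_gcds_from_umon)
  then show ?thesis by (simp add: opc_left_gcds)
qed

section \<open>The poset category\<close>

definition posc :: "'a::order set \<Rightarrow> ('a \<times> 'a) cat" where
  "posc P = \<lparr>arr = {(x, y). x \<in> P \<and> y \<in> P \<and> x \<le> y}, src = (\<lambda>p. (fst p, fst p)),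
     tgt = (\<lambda>p. (snd p, snd p)), cmp = (\<lambda>p q. (fst p, snd q))\<rparr>"

lemma posc_simps[simp]: "arr (posc P) = {(x, y). x \<in> P \<and> y \<in> P \<and> x \<le> y}"
  "src (posc P) p = (fst p, fst p)" "tgt (posc P) p = (snd p, snd p)" "cmp (posc P) p q = (fst p, snd q)"
  by (simp_all add: posc_def)

lemma posc_composable: "composable (posc P) p q \<longleftrightarrow> p \<in> arr (posc P) \<and> q \<in> arr (posc P) \<and> snd p = fst q"
  by (auto simp: composable_def)

lemma posc_id: "is_identity (posc P) e \<longleftrightarrow> (\<exists>x\<in>P. e = (x, x))"
  by (auto simp: is_identity_def)

lemma posc_category: "category (posc P)"
  unfolding category_def posc_composable by (auto intro: order_trans)

lemma posc_conical: "conical (posc P)"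
  unfolding conical_def posc_composable posc_id by (auto intro: order.antisym)

lemma posc_lc: "left_cancellative (posc P)"
  unfolding left_cancellative_def posc_composable by auto

lemma posc_rc: "right_cancellative (posc P)"
  unfolding right_cancellative_def posc_composable by auto

lemma posc_ldiv: "ldiv (posc P) p q \<longleftrightarrow> p \<in> arr (posc P) \<and> q \<in> arr (posc P) \<and> fst p = fst q \<and> snd p \<le> snd q"
  unfolding ldiv_def posc_composable
  by (cases p; cases q) (auto intro!: exI[of _ "(snd p, snd q)"])

lemma posc_rdiv: "rdiv (posc P) p q \<longleftrightarrow> p \<in> arr (posc P) \<and> q \<in> arr (posc P) \<and> snd p = snd q \<and> fst q \<le> fst p"
  unfolding rdiv_def posc_composable
  by (cases p; cases q) (auto intro!: exI[of _ "(fst q, fst p)"])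

lemma urel_posc_cmp:
  assumes "x \<in> P" "y \<in> P" "z \<in> P" "x \<le> y" "y \<le> z"
  shows "([(x, y), (y, z)], [(x, z)]) \<in> urel (posc P)"
proof -
  have "composable (posc P) (x, y) (y, z)" using assms by (simp add: posc_composable)
  then have "([(x, y), (y, z)], [cmp (posc P) (x, y) (y, z)]) \<in> urel (posc P)" unfolding urel_def by blast
  then show ?thesis by simp
qed

lemma urel_posc_id: "x \<in> P \<Longrightarrow> ([(x, x)], []) \<in> urel (posc P)"
  unfolding urel_def posc_id by blast

lemma pres_monoid_cong: "pcong R = pcong R' \<Longrightarrow> pres_monoid G R = pres_monoid G R'"
  unfolding pres_monoid_def pclass_def by simp

lemma interval_monoid_umon: "interval_monoid P = umon (posc P)"
proof -
  define R where "R = {([(x, x)], []) | x. x \<in> P} \<union>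
        {([(x, z)], [(x, y), (y, z)]) | x y z. x \<in> P \<and> y \<in> P \<and> z \<in> P \<and> x \<le> y \<and> y \<le> z}"
  have 1: "pcong (urel (posc P)) l r" if "(l, r) \<in> R" for l r
  proof -
    have "(\<exists>x. x \<in> P \<and> l = [(x, x)] \<and> r = []) \<or> (\<exists>x y z. l = [(x, z)] \<and> r = [(x, y), (y, z)] \<and> x \<in> P \<and> y \<in> P \<and> z \<in> P \<and> x \<le> y \<and> y \<le> z)"
      using that unfolding R_def by blast
    then show ?thesis
    proof (elim disjE exE conjE)
      fix x assume "x \<in> P" "l = [(x, x)]" "r = []"
      then show ?thesis using urel_posc_id pcong_rel1 by metis
    next
      fix x y z assume h: "l = [(x, z)]" "r = [(x, y), (y, z)]" "x \<in> P" "y \<in> P" "z \<in> P" "x \<le> y" "y \<le> z"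
      have "pcong (urel (posc P)) r l" using urel_posc_cmp[OF h(3-7)] h(1,2) by (simp add: pcong_rel1)
      then show ?thesis by (rule pcong.sym)
    qed
  qed
  have 2: "pcong R l r" if "(l, r) \<in> urel (posc P)" for l r
  proof -
    have "(\<exists>e. l = [e] \<and> r = [] \<and> is_identity (posc P) e) \<or> (\<exists>p q. l = [p, q] \<and> r = [cmp (posc P) p q] \<and> composable (posc P) p q)"
      using that unfolding urel_def by blast
    then show ?thesis
    proof (elim disjE exE conjE)
      fix e assume "l = [e]" "r = []" "is_identity (posc P) e"
      then obtain x where "x \<in> P" "l = [(x, x)]" "r = []" by (auto simp: posc_id)
      then have "(l, r) \<in> R" unfolding R_def by blast
      then show ?thesis by (rule pcong_rel1)
    next
      fix p q assume h: "l = [p, q]" "r = [cmp (posc P) p q]" "composable (posc P) p q"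
      obtain a b c d where pq: "p = (a, b)" "q = (c, d)" by (cases p; cases q)
      have "a \<in> P" "b \<in> P" "d \<in> P" "a \<le> b" "b \<le> d" "c = b" using h(3) pq by (auto simp: posc_composable)
      then have "([(a, d)], [(a, b), (b, d)]) \<in> R" unfolding R_def by blast
      then have "pcong R r l" using h pq \<open>c = b\<close> by (simp add: pcong_rel1)
      then show ?thesis by (rule pcong.sym)
    qed
  qed
  have "pcong R = pcong (urel (posc P))"
    using pcong_mono[of R "urel (posc P)", OF 1] pcong_mono[of "urel (posc P)" R, OF 2] by (intro ext) blast
  then have "pres_monoid (arr (posc P)) R = pres_monoid (arr (posc P)) (urel (posc P))"
    by (rule pres_monoid_cong)
  moreover have "interval_monoid P = pres_monoid (arr (posc P)) R"
    unfolding interval_monoid_def R_def by simp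
  ultimately show ?thesis by (simp add: umon_eq)
qed

lemma meets_joins:
  fixes P :: "'a::order set"
  assumes "gcd_monoid (interval_monoid P)"
  shows meets: "\<And>x y z. x \<in> P \<Longrightarrow> y \<in> P \<Longrightarrow> z \<in> P \<Longrightarrow> x \<le> y \<Longrightarrow> x \<le> z \<Longrightarrow>
      \<exists>w\<in>P. x \<le> w \<and> w \<le> y \<and> w \<le> z \<and> (\<forall>w'\<in>P. x \<le> w' \<and> w' \<le> y \<and> w' \<le> z \<longrightarrow> w' \<le> w)"
    and joins: "\<And>x y z. x \<in> P \<Longrightarrow> y \<in> P \<Longrightarrow> z \<in> P \<Longrightarrow> y \<le> x \<Longrightarrow> z \<le> x \<Longrightarrow>
      \<exists>w\<in>P. y \<le> w \<and> z \<le> w \<and> w \<le> x \<and> (\<forall>w'\<in>P. y \<le> w' \<and> z \<le> w' \<and> w' \<le> x \<longrightarrow> w \<le> w')"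
proof -
  interpret L: lccat "posc P"
    by (simp add: lccat_def lccat_axioms_def ccat_def posc_category posc_conical posc_lc)
  have g: "has_left_gcds (umon (posc P))" "has_right_gcds (umon (posc P))"
    using assms by (simp_all add: gcd_monoid_def gcd_category_def interval_monoid_umon)
  have lg: "has_left_gcds (posc P)" by (rule L.left_gcds_from_umon[OF g(1)])
  have rg: "has_right_gcds (posc P)"
    by (rule right_gcds_from_umon[OF posc_category posc_conical posc_rc g(2)])
  fix x y z :: 'a
  {
    assume h: "x \<in> P" "y \<in> P" "z \<in> P" "x \<le> y" "x \<le> z"
    then have xy: "(x, y) \<in> arr (posc P)" and xz: "(x, z) \<in> arr (posc P)" by auto
    have E: "src (posc P) (x, y) = src (posc P) (x, z)" by simp
    note ex = mp[OF bspec[OF bspec[OF lg[unfolded has_left_gcds_def] xy] xz] E]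
    obtain d where d: "d \<in> arr (posc P)" "ldiv (posc P) d (x, y)" "ldiv (posc P) d (x, z)"
      "\<forall>c\<in>arr (posc P). ldiv (posc P) c (x, y) \<and> ldiv (posc P) c (x, z) \<longrightarrow> ldiv (posc P) c d"
      using ex by blast
    show "\<exists>w\<in>P. x \<le> w \<and> w \<le> y \<and> w \<le> z \<and> (\<forall>w'\<in>P. x \<le> w' \<and> w' \<le> y \<and> w' \<le> z \<longrightarrow> w' \<le> w)"
    proof (intro bexI[of _ "snd d"] conjI ballI impI)
      show "snd d \<in> P" "x \<le> snd d" "snd d \<le> y" "snd d \<le> z" using d(1,2,3) h
        by (auto simp: posc_ldiv)
      fix w' assume "w' \<in> P" "x \<le> w' \<and> w' \<le> y \<and> w' \<le> z"
      then have "ldiv (posc P) (x, w') d" using d(4)[rule_format, of "(x, w')"] h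
        by (auto simp: posc_ldiv)
      then show "w' \<le> snd d" by (simp add: posc_ldiv)
    qed
  }
  {
    assume h: "x \<in> P" "y \<in> P" "z \<in> P" "y \<le> x" "z \<le> x"
    then have xy: "(y, x) \<in> arr (posc P)" and xz: "(z, x) \<in> arr (posc P)" by auto
    have E: "tgt (posc P) (y, x) = tgt (posc P) (z, x)" by simp
    note ex = mp[OF bspec[OF bspec[OF rg[unfolded has_right_gcds_def] xy] xz] E]
    obtain d where d: "d \<in> arr (posc P)" "rdiv (posc P) d (y, x)" "rdiv (posc P) d (z, x)"
      "\<forall>c\<in>arr (posc P). rdiv (posc P) c (y, x) \<and> rdiv (posc P) c (z, x) \<longrightarrow> rdiv (posc P) c d"
      using ex by blast
    show "\<exists>w\<in>P. y \<le> w \<and> z \<le> w \<and> w \<le> x \<and> (\<forall>w'\<in>P. y \<le> w' \<and> z \<le> w' \<and> w' \<le> x \<longrightarrow> w \<le> w')"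
    proof (intro bexI[of _ "fst d"] conjI ballI impI)
      show "fst d \<in> P" "y \<le> fst d" "z \<le> fst d" "fst d \<le> x" using d(1,2,3) h
        by (auto simp: posc_rdiv)
      fix w' assume "w' \<in> P" "y \<le> w' \<and> z \<le> w' \<and> w' \<le> x"
      then have "rdiv (posc P) (w', x) d" using d(4)[rule_format, of "(w', x)"] h
        by (auto simp: posc_rdiv)
      then show "fst d \<le> w'" by (simp add: posc_rdiv)
    qed
  }
qed




locale spin =
  fixes P :: "'a::order set" and u v :: 'a
  assumes uP: "u \<in> P" and vP: "v \<in> P" and uv: "u < v"
    and zex: "\<exists>z\<in>P. u < z \<and> z < v"
    and tr: "\<And>a b c. a \<in> P \<Longrightarrow> u < a \<Longrightarrow> a < v \<Longrightarrow> b \<in> P \<Longrightarrow> u < b \<Longrightarrow> b < v \<Longrightarrow>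
        c \<in> P \<Longrightarrow> u < c \<Longrightarrow> c < v \<Longrightarrow> (a \<le> b \<or> b \<le> a) \<Longrightarrow> (b \<le> c \<or> c \<le> b) \<Longrightarrow> (a \<le> c \<or> c \<le> a)"
    and umin: "\<And>x. x \<in> P \<Longrightarrow> x \<le> u \<Longrightarrow> x = u"
    and vmax: "\<And>x. x \<in> P \<Longrightarrow> v \<le> x \<Longrightarrow> x = v"
begin

definition "opn y \<longleftrightarrow> y \<in> P \<and> u < y \<and> y < v"

abbreviation "MC \<equiv> max_chains P u v"

lemma mc_D:
  assumes "Z \<in> MC"
  shows "Z \<subseteq> {x\<in>P. u \<le> x \<and> x \<le> v}" "is_chain Z"
    "\<And>W. W \<subseteq> {x\<in>P. u \<le> x \<and> x \<le> v} \<Longrightarrow> is_chain W \<Longrightarrow> Z \<subseteq> W \<Longrightarrow> W = Z"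
  using assms unfolding max_chains_def by blast+

lemma mc_mem: "Z \<in> MC \<Longrightarrow> w \<in> Z \<Longrightarrow> w \<in> P \<and> u \<le> w \<and> w \<le> v"
  using mc_D(1) by blast

lemma mc_cases: "Z \<in> MC \<Longrightarrow> w \<in> Z \<Longrightarrow> w = u \<or> w = v \<or> opn w"
  using mc_mem[of Z w] unfolding opn_def by (auto simp: order.order_iff_strict)

lemma mc_uv: assumes Z: "Z \<in> MC" shows "u \<in> Z" "v \<in> Z"
proof -
  have iv: "u \<in> {x\<in>P. u \<le> x \<and> x \<le> v}" "v \<in> {x\<in>P. u \<le> x \<and> x \<le> v}" using uP vP uv by auto
  have "is_chain (insert u Z)" using mc_D(2)[OF Z] mc_mem[OF Z] unfolding is_chain_def by blast
  then have "insert u Z = Z" using mc_D(1)[OF Z] iv by (intro mc_D(3)[OF Z]) auto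
  then show "u \<in> Z" by blast
  have "is_chain (insert v Z)" using mc_D(2)[OF Z] mc_mem[OF Z] unfolding is_chain_def by blast
  then have "insert v Z = Z" using mc_D(1)[OF Z] iv by (intro mc_D(3)[OF Z]) auto
  then show "v \<in> Z" by blast
qed

lemma mc_close:
  assumes Z: "Z \<in> MC" and w: "w \<in> Z" "opn w" and y: "opn y" and c: "w \<le> y \<or> y \<le> w"
  shows "y \<in> Z"
proof -
  have "is_chain (insert y Z)"
    unfolding is_chain_def
  proof (intro ballI)
    fix a b assume a: "a \<in> insert y Z" and b: "b \<in> insert y Z"
    have cy: "a \<le> y \<or> y \<le> a" if "a \<in> Z" for a
    proof -
      from mc_cases[OF Z that] consider "a = u" | "a = v" | "opn a" by blast
      then show ?thesis
      proof cases
        case 1 then show ?thesis using y by (auto simp: opn_def)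
      next
        case 2 then show ?thesis using y by (auto simp: opn_def)
      next
        case 3
        have "a \<le> w \<or> w \<le> a" using mc_D(2)[OF Z] that w(1) unfolding is_chain_def by blast
        then show ?thesis using tr[of a w y] 3 w y c unfolding opn_def by blast
      qed
    qed
    show "a \<le> b \<or> b \<le> a" using a b cy mc_D(2)[OF Z] unfolding is_chain_def by auto
  qed
  moreover have "insert y Z \<subseteq> {x\<in>P. u \<le> x \<and> x \<le> v}" using mc_D(1)[OF Z] y by (auto simp: opn_def)
  ultimately have "insert y Z = Z" by (intro mc_D(3)[OF Z]) auto
  then show ?thesis by blast
qed

lemma mc_ex: assumes y: "opn y" shows "\<exists>Z\<in>MC. y \<in> Z"
proof -
  define Z where "Z = {u, v} \<union> {w. opn w \<and> (w \<le> y \<or> y \<le> w)}"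
  have sub: "Z \<subseteq> {x\<in>P. u \<le> x \<and> x \<le> v}" using uP vP uv unfolding Z_def opn_def by auto
  have ch: "is_chain Z"
    unfolding is_chain_def Z_def
  proof (intro ballI)
    fix a b assume "a \<in> {u, v} \<union> {w. opn w \<and> (w \<le> y \<or> y \<le> w)}" "b \<in> {u, v} \<union> {w. opn w \<and> (w \<le> y \<or> y \<le> w)}"
    then show "a \<le> b \<or> b \<le> a"
      using uv tr[of a y b] y unfolding opn_def by (auto simp: order.order_iff_strict)
  qed
  have "W = Z" if W: "W \<subseteq> {x\<in>P. u \<le> x \<and> x \<le> v}" "is_chain W" "Z \<subseteq> W" for W
  proof
    show "W \<subseteq> Z"
    proof
      fix a assume a: "a \<in> W"
      have yW: "y \<in> W" using W(3) y unfolding Z_def by auto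
      have "a \<le> y \<or> y \<le> a" using W(2) a yW unfolding is_chain_def by blast
      moreover have "a = u \<or> a = v \<or> opn a" using W(1) a unfolding opn_def by (auto simp: order.order_iff_strict)
      ultimately show "a \<in> Z" unfolding Z_def by auto
    qed
  qed (use W in auto)
  then have "Z \<in> MC" using sub ch unfolding max_chains_def by blast
  moreover have "y \<in> Z" using y unfolding Z_def by auto
  ultimately show ?thesis by blast
qed

lemma mc_sub:
  assumes Z: "Z \<in> MC" and Z': "Z' \<in> MC" and y: "y \<in> Z" "y \<in> Z'" "opn y"
  shows "Z \<subseteq> Z'"
proof
  fix a assume a: "a \<in> Z"
  from mc_cases[OF Z a] consider "a = u" | "a = v" | "opn a" by blast
  then show "a \<in> Z'"
  proof cases
    case 1 then show ?thesis using mc_uv[OF Z'] by simp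
  next
    case 2 then show ?thesis using mc_uv[OF Z'] by simp
  next
    case 3
    have "a \<le> y \<or> y \<le> a" using mc_D(2)[OF Z] a y(1) unfolding is_chain_def by blast
    then show ?thesis using mc_close[OF Z' y(2) y(3) 3] by blast
  qed
qed

lemma mc_uniq: "Z \<in> MC \<Longrightarrow> Z' \<in> MC \<Longrightarrow> y \<in> Z \<Longrightarrow> y \<in> Z' \<Longrightarrow> opn y \<Longrightarrow> Z = Z'"
  using mc_sub by blast

definition "ch y = (THE Z. Z \<in> MC \<and> y \<in> Z)"

lemma ch_prop: "opn y \<Longrightarrow> ch y \<in> MC \<and> y \<in> ch y"
  unfolding ch_def by (rule theI') (use mc_ex mc_uniq in blast)

lemma ch_eq: "Z \<in> MC \<Longrightarrow> y \<in> Z \<Longrightarrow> opn y \<Longrightarrow> ch y = Z"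
  using ch_prop mc_uniq by blast

lemma ch_mono: "opn y \<Longrightarrow> opn y' \<Longrightarrow> y \<le> y' \<Longrightarrow> ch y = ch y'"
  using ch_prop[of y] mc_close[of "ch y" y y'] ch_eq[of "ch y" y'] by blast

lemma mc_open_ex: "Z \<in> MC \<Longrightarrow> \<exists>w\<in>Z. opn w"
proof (rule ccontr)
  assume Z: "Z \<in> MC" and n: "\<not> (\<exists>w\<in>Z. opn w)"
  obtain z where z: "opn z" using zex unfolding opn_def by blast
  have "Z \<subseteq> {u, v}" using mc_cases[OF Z] n by blast
  then have "is_chain (insert z Z)" using z unfolding is_chain_def opn_def by (auto simp: order.order_iff_strict)
  moreover have "insert z Z \<subseteq> {x\<in>P. u \<le> x \<and> x \<le> v}" using mc_D(1)[OF Z] z by (auto simp: opn_def)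
  ultimately have "insert z Z = Z" by (intro mc_D(3)[OF Z]) auto
  then show False using n z by blast
qed

end




context spin
begin

abbreviation "K \<equiv> Cpuv P u v"

lemma Iv_arr: "Iv x y \<in> arr K \<longleftrightarrow> x \<in> P \<and> y \<in> P \<and> x \<le> y \<and> (x, y) \<noteq> (u, v)"
  by (auto simp: Cpuv_def)

lemma Ch_arr: "Ch Z \<in> arr K \<longleftrightarrow> Z \<in> MC"
  by (auto simp: Cpuv_def)

lemma K_src[simp]: "src K (Iv x y) = Iv x x" "src K (Ch Z) = Iv u u"
  by (simp_all add: Cpuv_def)
lemma K_tgt[simp]: "tgt K (Iv x y) = Iv y y" "tgt K (Ch Z) = Iv v v"
  by (simp_all add: Cpuv_def)

lemma K_cmp[simp]: "cmp K (Iv x y) (Iv y' z) = (if x = u \<and> z = v then Ch (ch y) else Iv x z)"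
  "cmp K (Iv x y) (Ch Z) = Ch Z" "cmp K (Ch Z) (Iv x y) = Ch Z" "cmp K (Ch Z) (Ch W) = Ch Z"
  by (simp_all add: Cpuv_def ch_def)

lemma uv_ne: "u \<noteq> v" using uv by simp

lemma uu_arr: "Iv u u \<in> arr K" using uP uv by (auto simp: Iv_arr)
lemma vv_arr: "Iv v v \<in> arr K" using vP uv by (auto simp: Iv_arr)

lemma comp_II: "composable K (Iv a b) (Iv c d) \<longleftrightarrow> Iv a b \<in> arr K \<and> Iv c d \<in> arr K \<and> b = c"
  by (auto simp: composable_def)

lemma comp_IC: "composable K (Iv a b) (Ch Z) \<longleftrightarrow> a = u \<and> b = u \<and> Z \<in> MC"
  using umin uu_arr by (auto simp: composable_def Iv_arr Ch_arr)

lemma comp_CI: "composable K (Ch Z) (Iv a b) \<longleftrightarrow> Z \<in> MC \<and> a = v \<and> b = v"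
  using vmax vv_arr by (auto simp: composable_def Iv_arr Ch_arr)

lemma comp_CC: "\<not> composable K (Ch Z) (Ch W)"
  using uv by (auto simp: composable_def)

lemmas comps = comp_II comp_IC comp_CI comp_CC

lemma K_id: "is_identity K e \<longleftrightarrow> (\<exists>x\<in>P. e = Iv x x)"
proof
  assume "is_identity K e"
  then show "\<exists>x\<in>P. e = Iv x x" by (cases e) (auto simp: is_identity_def Iv_arr)
next
  assume "\<exists>x\<in>P. e = Iv x x"
  then show "is_identity K e" using uv by (auto simp: is_identity_def Iv_arr)
qed

lemma opn_mid: "Iv a b \<in> arr K \<Longrightarrow> Iv b c \<in> arr K \<Longrightarrow> a = u \<Longrightarrow> c = v \<Longrightarrow> opn b"
  unfolding Iv_arr opn_def by (auto simp: order.order_iff_strict)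

lemma cmp_II_arr:
  assumes "Iv a b \<in> arr K" "Iv b c \<in> arr K"
  shows "cmp K (Iv a b) (Iv b c) \<in> arr K"
proof (cases "a = u \<and> c = v")
  case True
  then show ?thesis using ch_prop[OF opn_mid[OF assms]] by (simp add: Ch_arr)
next
  case False
  then show ?thesis using assms by (auto simp: Iv_arr intro: order_trans)
qed

lemma assoc_III:
  assumes ab: "Iv a b \<in> arr K" and bc: "Iv b c \<in> arr K" and cd: "Iv c d \<in> arr K"
  shows "cmp K (cmp K (Iv a b) (Iv b c)) (Iv c d) = cmp K (Iv a b) (cmp K (Iv b c) (Iv c d))"
proof (cases "a = u \<and> c = v")
  case True
  then have "d = v" using cd vmax by (auto simp: Iv_arr)
  moreover have "b \<noteq> u" using bc True by (auto simp: Iv_arr)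
  ultimately show ?thesis using True by simp
next
  case F: False
  show ?thesis
  proof (cases "b = u \<and> d = v")
    case True
    then have "a = u" using ab umin by (auto simp: Iv_arr)
    then show ?thesis using True F by simp
  next
    case F2: False
    show ?thesis
    proof (cases "a = u \<and> d = v")
      case True
      have "opn b" "opn c" "b \<le> c" using ab bc cd True F F2 unfolding Iv_arr opn_def
        by (auto simp: order.order_iff_strict intro: order.strict_trans1 order.strict_trans2)
      then have "ch b = ch c" by (rule ch_mono)
      then show ?thesis using True F F2 by simp
    next
      case False
      then show ?thesis using F F2 by simp
    qed
  qed
qed

lemma K_category: "category K"
  unfolding category_def
proof (intro conjI ballI allI impI)
  fix x assume x: "x \<in> arr K"
  show "src K x \<in> arr K" "tgt K x \<in> arr K" using x uu_arr vv_arr uv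
    by (cases x; auto simp: Iv_arr)+
  show "src K (src K x) = src K x" "tgt K (src K x) = src K x" "src K (tgt K x) = tgt K x"
    "tgt K (tgt K x) = tgt K x" by (cases x; simp)+
  show "cmp K (src K x) x = x" "cmp K x (tgt K x) = x" using x by (cases x; auto simp: Iv_arr)+
next
  fix x y assume c: "composable K x y"
  have "cmp K x y \<in> arr K \<and> src K (cmp K x y) = src K x \<and> tgt K (cmp K x y) = tgt K y"
  proof (cases x)
    case (Iv a b)
    show ?thesis
    proof (cases y)
      case (Iv b' d)
      then have "Iv a b \<in> arr K" "Iv b d \<in> arr K" "b' = b" using c \<open>x = Iv a b\<close> by (auto simp: comp_II)
      then show ?thesis using cmp_II_arr[of a b d] \<open>x = Iv a b\<close> Iv by auto
    next
      case (Ch Z) then show ?thesis using c \<open>x = Iv a b\<close> by (simp add: comp_IC Ch_arr)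
    qed
  next
    case (Ch Z)
    then show ?thesis using c by (cases y) (simp_all add: comp_CI comp_CC Ch_arr)
  qed
  then show "cmp K x y \<in> arr K" "src K (cmp K x y) = src K x" "tgt K (cmp K x y) = tgt K y" by simp_all
next
  fix x y z assume "composable K x y \<and> composable K y z"
  then have c1: "composable K x y" and c2: "composable K y z" by simp_all
  show "cmp K (cmp K x y) z = cmp K x (cmp K y z)"
  proof (cases x)
    case (Iv a b)
    show ?thesis
    proof (cases y)
      case (Iv b' c)
      show ?thesis
      proof (cases z)
        case (Iv c' d)
        have e: "b' = b" "c' = c" "Iv a b \<in> arr K" "Iv b c \<in> arr K" "Iv c d \<in> arr K"
          using c1 c2 \<open>x = Iv a b\<close> \<open>y = Iv b' c\<close> Iv by (auto simp: comp_II)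
        show ?thesis using assoc_III[OF e(3-5)] unfolding \<open>x = Iv a b\<close> \<open>y = Iv b' c\<close> Iv e(1,2) .
      next
        case (Ch Z)
        then have "b' = u" "c = u" using c2 \<open>y = Iv b' c\<close> by (simp_all add: comp_IC)
        then have "a = u" "b = u" using c1 \<open>x = Iv a b\<close> \<open>y = Iv b' c\<close> umin by (auto simp: comp_II Iv_arr)
        then show ?thesis using Ch \<open>x = Iv a b\<close> \<open>y = Iv b' c\<close> \<open>b' = u\<close> \<open>c = u\<close> uv_ne by simp
      qed
    next
      case (Ch Z)
      then show ?thesis using c1 c2 \<open>x = Iv a b\<close> by (cases z) (simp_all add: comp_IC comp_CI comp_CC)
    qed
  next
    case (Ch Z)
    then have "y = Iv v v" using c1 by (cases y) (simp_all add: comp_CI comp_CC)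
    then have "z = Iv v v" using c2 vmax uv_ne by (cases z) (auto simp: comp_II comp_IC Iv_arr)
    then show ?thesis using Ch \<open>y = Iv v v\<close> uv_ne by simp
  qed
qed

lemma K_conical: "conical K"
  unfolding conical_def
proof (intro allI impI)
  fix x y assume h: "composable K x y \<and> is_identity K (cmp K x y)"
  show "is_identity K x"
  proof (cases x)
    case (Iv a b)
    show ?thesis
    proof (cases y)
      case (Iv b' c)
      then have ar: "Iv a b \<in> arr K" "Iv b c \<in> arr K" "b' = b" using h \<open>x = Iv a b\<close> by (auto simp: comp_II)
      have "\<not> (a = u \<and> c = v)" using h \<open>x = Iv a b\<close> Iv by (auto simp: K_id)
      then have "a = c" using h \<open>x = Iv a b\<close> Iv by (auto simp: K_id)
      then have "a = b" using ar by (auto simp: Iv_arr)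
      then show ?thesis using ar \<open>x = Iv a b\<close> by (auto simp: K_id Iv_arr)
    next
      case (Ch Z) then show ?thesis using h \<open>x = Iv a b\<close> by (auto simp: K_id)
    qed
  next
    case (Ch Z) then show ?thesis using h by (cases y) (auto simp: K_id comp_CC)
  qed
qed

lemma K_lc: "left_cancellative K"
  unfolding left_cancellative_def
proof (intro allI impI)
  fix a x y assume h: "composable K a x \<and> composable K a y \<and> cmp K a x = cmp K a y"
  show "x = y"
  proof (cases a)
    case (Ch Z)
    then have "x = Iv v v" "y = Iv v v" using h by (cases x; cases y; simp add: comps)+
    then show ?thesis by simp
  next
    case (Iv p q)
    show ?thesis
    proof (cases x)
      case (Iv q' c)
      show ?thesis
      proof (cases y)
        case (Iv q'' d)
        then show ?thesis using h \<open>a = Iv p q\<close> \<open>x = Iv q' c\<close> by (auto simp: comp_II split: if_splits)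
      next
        case (Ch W)
        then have "p = u" "q = u" using h \<open>a = Iv p q\<close> by (simp_all add: comp_IC)
        then show ?thesis using h \<open>a = Iv p q\<close> \<open>x = Iv q' c\<close> Ch by (auto simp: comp_II Iv_arr split: if_splits)
      qed
    next
      case (Ch W)
      then have "p = u" "q = u" using h \<open>a = Iv p q\<close> by (simp_all add: comp_IC)
      show ?thesis
      proof (cases y)
        case (Iv q'' d)
        then show ?thesis using h \<open>a = Iv p q\<close> Ch \<open>p = u\<close> \<open>q = u\<close> by (auto simp: comp_II Iv_arr split: if_splits)
      next
        case (Ch W') then show ?thesis using h \<open>a = Iv p q\<close> \<open>x = Ch W\<close> by simp
      qed
    qed
  qed
qed

lemma K_rc: "right_cancellative K"
  unfolding right_cancellative_def
proof (intro allI impI)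
  fix a x y assume h: "composable K x a \<and> composable K y a \<and> cmp K x a = cmp K y a"
  show "x = y"
  proof (cases a)
    case (Ch Z)
    then have "x = Iv u u" "y = Iv u u" using h by (cases x; cases y; simp add: comps)+
    then show ?thesis by simp
  next
    case (Iv p q)
    show ?thesis
    proof (cases x)
      case (Iv c p')
      show ?thesis
      proof (cases y)
        case (Iv d p'')
        then show ?thesis using h \<open>a = Iv p q\<close> \<open>x = Iv c p'\<close> by (auto simp: comp_II split: if_splits)
      next
        case (Ch W)
        then have "p = v" "q = v" using h \<open>a = Iv p q\<close> by (simp_all add: comp_CI)
        then show ?thesis using h \<open>a = Iv p q\<close> \<open>x = Iv c p'\<close> Ch by (auto simp: comp_II Iv_arr split: if_splits)
      qed
    next
      case (Ch W)
      then have "p = v" "q = v" using h \<open>a = Iv p q\<close> by (simp_all add: comp_CI)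
      show ?thesis
      proof (cases y)
        case (Iv d p'')
        then show ?thesis using h \<open>a = Iv p q\<close> Ch \<open>p = v\<close> \<open>q = v\<close> by (auto simp: comp_II Iv_arr split: if_splits)
      next
        case (Ch W') then show ?thesis using h \<open>a = Iv p q\<close> \<open>x = Ch W\<close> by simp
      qed
    qed
  qed
qed

end




locale spinm = spin +
  assumes meets: "\<And>x y z. x \<in> P \<Longrightarrow> y \<in> P \<Longrightarrow> z \<in> P \<Longrightarrow> x \<le> y \<Longrightarrow> x \<le> z \<Longrightarrow>
      \<exists>w\<in>P. x \<le> w \<and> w \<le> y \<and> w \<le> z \<and> (\<forall>w'\<in>P. x \<le> w' \<and> w' \<le> y \<and> w' \<le> z \<longrightarrow> w' \<le> w)"
    and joins: "\<And>x y z. x \<in> P \<Longrightarrow> y \<in> P \<Longrightarrow> z \<in> P \<Longrightarrow> y \<le> x \<Longrightarrow> z \<le> x \<Longrightarrow>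
      \<exists>w\<in>P. y \<le> w \<and> z \<le> w \<and> w \<le> x \<and> (\<forall>w'\<in>P. y \<le> w' \<and> z \<le> w' \<and> w' \<le> x \<longrightarrow> w \<le> w')"
begin

lemma ldiv_Iv:
  assumes a: "Iv x y \<in> arr K"
  shows "ldiv K c (Iv x y) \<longleftrightarrow> (\<exists>w. c = Iv x w \<and> w \<in> P \<and> x \<le> w \<and> w \<le> y)"
proof
  assume "ldiv K c (Iv x y)"
  then obtain d where d: "composable K c d" "Iv x y = cmp K c d" unfolding ldiv_def by blast
  show "\<exists>w. c = Iv x w \<and> w \<in> P \<and> x \<le> w \<and> w \<le> y"
  proof (cases c)
    case (Iv a b)
    show ?thesis
    proof (cases d)
      case (Iv b' e)
      then have "b' = b" "Iv a b \<in> arr K" "Iv b e \<in> arr K" using d \<open>c = Iv a b\<close> by (auto simp: comp_II)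
      moreover have "a = x" "e = y" using d(2) \<open>c = Iv a b\<close> Iv by (auto split: if_splits)
      ultimately show ?thesis using \<open>c = Iv a b\<close> by (auto simp: Iv_arr)
    next
      case (Ch Z) then show ?thesis using d \<open>c = Iv a b\<close> by simp
    qed
  next
    case (Ch Z) then show ?thesis using d by (cases d) simp_all
  qed
next
  assume "\<exists>w. c = Iv x w \<and> w \<in> P \<and> x \<le> w \<and> w \<le> y"
  then obtain w where w: "c = Iv x w" "w \<in> P" "x \<le> w" "w \<le> y" by blast
  have xy: "x \<in> P" "y \<in> P" "x \<le> y" "(x, y) \<noteq> (u, v)" using a by (simp_all add: Iv_arr)
  have 1: "Iv x w \<in> arr K" using xy w vmax[of y] order_trans[of v w y] by (auto simp: Iv_arr)
  have 2: "Iv w y \<in> arr K" using xy w umin[of x] order_trans[of x w u] by (auto simp: Iv_arr)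
  have "composable K (Iv x w) (Iv w y)" using 1 2 by (simp add: comp_II)
  moreover have "cmp K (Iv x w) (Iv w y) = Iv x y" using xy by auto
  ultimately show "ldiv K c (Iv x y)" unfolding ldiv_def using w by metis
qed

lemma rdiv_Iv:
  assumes a: "Iv x y \<in> arr K"
  shows "rdiv K c (Iv x y) \<longleftrightarrow> (\<exists>w. c = Iv w y \<and> w \<in> P \<and> x \<le> w \<and> w \<le> y)"
proof
  assume "rdiv K c (Iv x y)"
  then obtain d where d: "composable K d c" "Iv x y = cmp K d c" unfolding rdiv_def by blast
  show "\<exists>w. c = Iv w y \<and> w \<in> P \<and> x \<le> w \<and> w \<le> y"
  proof (cases c)
    case (Iv b e)
    show ?thesis
    proof (cases d)
      case (Iv a b')
      then have "b' = b" "Iv a b \<in> arr K" "Iv b e \<in> arr K" using d \<open>c = Iv b e\<close> by (auto simp: comp_II)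
      moreover have "a = x" "e = y" using d(2) \<open>c = Iv b e\<close> Iv by (auto split: if_splits)
      ultimately show ?thesis using \<open>c = Iv b e\<close> by (auto simp: Iv_arr)
    next
      case (Ch Z) then show ?thesis using d \<open>c = Iv b e\<close> by simp
    qed
  next
    case (Ch Z) then show ?thesis using d by (cases d) simp_all
  qed
next
  assume "\<exists>w. c = Iv w y \<and> w \<in> P \<and> x \<le> w \<and> w \<le> y"
  then obtain w where w: "c = Iv w y" "w \<in> P" "x \<le> w" "w \<le> y" by blast
  have xy: "x \<in> P" "y \<in> P" "x \<le> y" "(x, y) \<noteq> (u, v)" using a by (simp_all add: Iv_arr)
  have 1: "Iv x w \<in> arr K" using xy w vmax[of y] order_trans[of v w y] by (auto simp: Iv_arr)
  have 2: "Iv w y \<in> arr K" using xy w umin[of x] order_trans[of x w u] by (auto simp: Iv_arr)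
  have "composable K (Iv x w) (Iv w y)" using 1 2 by (simp add: comp_II)
  moreover have "cmp K (Iv x w) (Iv w y) = Iv x y" using xy by auto
  ultimately show "rdiv K c (Iv x y)" unfolding rdiv_def using w by metis
qed

lemma ldiv_Ch:
  assumes Z: "Z \<in> MC"
  shows "ldiv K c (Ch Z) \<longleftrightarrow> c = Ch Z \<or> (\<exists>w\<in>Z. w \<noteq> v \<and> c = Iv u w)"
proof
  assume "ldiv K c (Ch Z)"
  then obtain d where d: "composable K c d" "Ch Z = cmp K c d" unfolding ldiv_def by blast
  show "c = Ch Z \<or> (\<exists>w\<in>Z. w \<noteq> v \<and> c = Iv u w)"
  proof (cases c)
    case (Iv a b)
    show ?thesis
    proof (cases d)
      case (Iv b' e)
      then have ar: "b' = b" "Iv a b \<in> arr K" "Iv b e \<in> arr K" using d \<open>c = Iv a b\<close> by (auto simp: comp_II)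
      moreover have ae: "a = u" "e = v" "Z = ch b" using d(2) \<open>c = Iv a b\<close> Iv by (auto split: if_splits)
      ultimately have "opn b" using opn_mid by blast
      then have "b \<in> Z" "b \<noteq> v" using ch_prop ae by (auto simp: opn_def)
      then show ?thesis using \<open>c = Iv a b\<close> ae by blast
    next
      case (Ch W)
      then have "a = u" "b = u" using d \<open>c = Iv a b\<close> by (simp_all add: comp_IC)
      then show ?thesis using mc_uv[OF Z] uv_ne \<open>c = Iv a b\<close> by blast
    qed
  next
    case (Ch W) then show ?thesis using d by (cases d) (simp_all add: comp_CC)
  qed
next
  assume h: "c = Ch Z \<or> (\<exists>w\<in>Z. w \<noteq> v \<and> c = Iv u w)"
  show "ldiv K c (Ch Z)"
  proof (cases "c = Ch Z")
    case True
    have "composable K (Ch Z) (Iv v v)" using Z by (simp add: comp_CI)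
    then show ?thesis unfolding ldiv_def using True by force
  next
    case False
    then obtain w where w: "w \<in> Z" "w \<noteq> v" "c = Iv u w" using h by blast
    show ?thesis
    proof (cases "w = u")
      case True
      have "composable K (Iv u u) (Ch Z)" using Z by (simp add: comp_IC)
      then show ?thesis unfolding ldiv_def using True w by force
    next
      case False
      then have ow: "opn w" using mc_cases[OF Z w(1)] w(2) by blast
      have "Iv u w \<in> arr K" "Iv w v \<in> arr K" using ow False uP vP by (auto simp: Iv_arr opn_def)
      then have "composable K (Iv u w) (Iv w v)" by (simp add: comp_II)
      moreover have "cmp K (Iv u w) (Iv w v) = Ch Z" using ch_eq[OF Z w(1) ow] by simp
      ultimately show ?thesis unfolding ldiv_def using w by metis
    qed
  qed
qed

lemma rdiv_Ch:
  assumes Z: "Z \<in> MC"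
  shows "rdiv K c (Ch Z) \<longleftrightarrow> c = Ch Z \<or> (\<exists>w\<in>Z. w \<noteq> u \<and> c = Iv w v)"
proof
  assume "rdiv K c (Ch Z)"
  then obtain d where d: "composable K d c" "Ch Z = cmp K d c" unfolding rdiv_def by blast
  show "c = Ch Z \<or> (\<exists>w\<in>Z. w \<noteq> u \<and> c = Iv w v)"
  proof (cases c)
    case (Iv b e)
    show ?thesis
    proof (cases d)
      case (Iv a b')
      then have ar: "b' = b" "Iv a b \<in> arr K" "Iv b e \<in> arr K" using d \<open>c = Iv b e\<close> by (auto simp: comp_II)
      moreover have ae: "a = u" "e = v" "Z = ch b" using d(2) \<open>c = Iv b e\<close> Iv ar(1) by (auto split: if_splits)
      ultimately have "opn b" using opn_mid by blast
      then have "b \<in> Z" "b \<noteq> u" using ch_prop ae by (auto simp: opn_def)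
      then show ?thesis using \<open>c = Iv b e\<close> ae by blast
    next
      case (Ch W)
      then have "b = v" "e = v" using d \<open>c = Iv b e\<close> by (simp_all add: comp_CI)
      then show ?thesis using mc_uv[OF Z] uv_ne \<open>c = Iv b e\<close> by (intro disjI2 bexI[of _ v]) auto
    qed
  next
    case (Ch W) then show ?thesis using d by (cases d) (simp_all add: comp_CC)
  qed
next
  assume h: "c = Ch Z \<or> (\<exists>w\<in>Z. w \<noteq> u \<and> c = Iv w v)"
  show "rdiv K c (Ch Z)"
  proof (cases "c = Ch Z")
    case True
    have "composable K (Iv u u) (Ch Z)" using Z by (simp add: comp_IC)
    then show ?thesis unfolding rdiv_def using True by force
  next
    case False
    then obtain w where w: "w \<in> Z" "w \<noteq> u" "c = Iv w v" using h by blast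
    show ?thesis
    proof (cases "w = v")
      case True
      have "composable K (Ch Z) (Iv v v)" using Z by (simp add: comp_CI)
      then show ?thesis unfolding rdiv_def using True w by force
    next
      case False
      then have ow: "opn w" using mc_cases[OF Z w(1)] w(2) by blast
      have "Iv u w \<in> arr K" "Iv w v \<in> arr K" using ow False w(2) uP vP by (auto simp: Iv_arr opn_def)
      then have "composable K (Iv u w) (Iv w v)" by (simp add: comp_II)
      moreover have "cmp K (Iv u w) (Iv w v) = Ch Z" using ch_eq[OF Z w(1) ow] by simp
      ultimately show ?thesis unfolding rdiv_def using w by metis
    qed
  qed
qed

end




context spinm
begin

definition "LG a b d \<longleftrightarrow> d \<in> arr K \<and> ldiv K d a \<and> ldiv K d b \<and> (\<forall>c\<in>arr K. ldiv K c a \<and> ldiv K c b \<longrightarrow> ldiv K c d)"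
definition "RG a b d \<longleftrightarrow> d \<in> arr K \<and> rdiv K d a \<and> rdiv K d b \<and> (\<forall>c\<in>arr K. rdiv K c a \<and> rdiv K c b \<longrightarrow> rdiv K c d)"

lemma LG_sym: "LG a b d \<Longrightarrow> LG b a d" unfolding LG_def by blast
lemma RG_sym: "RG a b d \<Longrightarrow> RG b a d" unfolding RG_def by blast

lemma lg_II:
  assumes a: "Iv x y \<in> arr K" and b: "Iv x z \<in> arr K"
  shows "\<exists>d. LG (Iv x y) (Iv x z) d"
proof -
  have h: "x \<in> P" "y \<in> P" "z \<in> P" "x \<le> y" "x \<le> z" "(x, y) \<noteq> (u, v)" using a b by (simp_all add: Iv_arr)
  obtain w where w: "w \<in> P" "x \<le> w" "w \<le> y" "w \<le> z" "\<forall>w'\<in>P. x \<le> w' \<and> w' \<le> y \<and> w' \<le> z \<longrightarrow> w' \<le> w"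
    using meets[OF h(1-5)] by blast
  have d: "Iv x w \<in> arr K" using h w vmax[of y] order_trans[of v w y] by (auto simp: Iv_arr)
  show ?thesis unfolding LG_def
  proof (intro exI[of _ "Iv x w"] conjI ballI impI)
    show "Iv x w \<in> arr K" by (rule d)
    show "ldiv K (Iv x w) (Iv x y)" "ldiv K (Iv x w) (Iv x z)" using w by (auto simp: ldiv_Iv[OF a] ldiv_Iv[OF b])
    fix c assume "c \<in> arr K" "ldiv K c (Iv x y) \<and> ldiv K c (Iv x z)"
    then obtain w' where "c = Iv x w'" "w' \<in> P" "x \<le> w'" "w' \<le> y" "w' \<le> z"
      by (auto simp: ldiv_Iv[OF a] ldiv_Iv[OF b])
    then show "ldiv K c (Iv x w)" using w(5) by (auto simp: ldiv_Iv[OF d])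
  qed
qed

lemma rg_II:
  assumes a: "Iv x y \<in> arr K" and b: "Iv z y \<in> arr K"
  shows "\<exists>d. RG (Iv x y) (Iv z y) d"
proof -
  have h: "x \<in> P" "y \<in> P" "z \<in> P" "x \<le> y" "z \<le> y" "(x, y) \<noteq> (u, v)" using a b by (simp_all add: Iv_arr)
  obtain w where w: "w \<in> P" "x \<le> w" "z \<le> w" "w \<le> y" "\<forall>w'\<in>P. x \<le> w' \<and> z \<le> w' \<and> w' \<le> y \<longrightarrow> w \<le> w'"
    using joins[OF h(2) h(1) h(3) h(4) h(5)] by blast
  have d: "Iv w y \<in> arr K" using h w umin[of x] order_trans[of x w u] by (auto simp: Iv_arr)
  show ?thesis unfolding RG_def
  proof (intro exI[of _ "Iv w y"] conjI ballI impI)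
    show "Iv w y \<in> arr K" by (rule d)
    show "rdiv K (Iv w y) (Iv x y)" "rdiv K (Iv w y) (Iv z y)" using w by (auto simp: rdiv_Iv[OF a] rdiv_Iv[OF b])
    fix c assume "c \<in> arr K" "rdiv K c (Iv x y) \<and> rdiv K c (Iv z y)"
    then obtain w' where "c = Iv w' y" "w' \<in> P" "x \<le> w'" "z \<le> w'" "w' \<le> y"
      by (auto simp: rdiv_Iv[OF a] rdiv_Iv[OF b])
    then show "rdiv K c (Iv w y)" using w(5) by (auto simp: rdiv_Iv[OF d])
  qed
qed

lemma lg_IC:
  assumes a: "Iv u y \<in> arr K" and Z: "Z \<in> MC"
  shows "\<exists>d. LG (Iv u y) (Ch Z) d"
proof -
  have h: "y \<in> P" "u \<le> y" "y \<noteq> v" using a by (auto simp: Iv_arr)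
  obtain w0 where w: "w0 \<in> P" "u \<le> w0" "w0 \<le> y" "w0 \<le> v" "\<forall>w'\<in>P. u \<le> w' \<and> w' \<le> y \<and> w' \<le> v \<longrightarrow> w' \<le> w0"
    using meets[OF uP h(1) vP h(2) order.strict_implies_order[OF uv]] by blast
  have w0v: "w0 \<noteq> v" using w h vmax[of y] by auto
  show ?thesis
  proof (cases "w0 \<in> Z")
    case True
    have d: "Iv u w0 \<in> arr K" using w w0v uP by (auto simp: Iv_arr)
    show ?thesis unfolding LG_def
    proof (intro exI[of _ "Iv u w0"] conjI ballI impI)
      show "Iv u w0 \<in> arr K" by (rule d)
      show "ldiv K (Iv u w0) (Iv u y)" using w by (auto simp: ldiv_Iv[OF a])
      show "ldiv K (Iv u w0) (Ch Z)" using True w0v by (auto simp: ldiv_Ch[OF Z])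
      fix c assume "c \<in> arr K" "ldiv K c (Iv u y) \<and> ldiv K c (Ch Z)"
      then obtain w' where c: "c = Iv u w'" "w' \<in> P" "u \<le> w'" "w' \<le> y" "w' \<in> Z"
        by (auto simp: ldiv_Iv[OF a] ldiv_Ch[OF Z])
      then have "w' \<le> v" using mc_mem[OF Z] by blast
      then show "ldiv K c (Iv u w0)" using w(5) c by (auto simp: ldiv_Iv[OF d])
    qed
  next
    case False
    show ?thesis unfolding LG_def
    proof (intro exI[of _ "Iv u u"] conjI ballI impI)
      show "Iv u u \<in> arr K" by (rule uu_arr)
      show "ldiv K (Iv u u) (Iv u y)" using h uP by (auto simp: ldiv_Iv[OF a])
      show "ldiv K (Iv u u) (Ch Z)" using mc_uv[OF Z] uv_ne by (auto simp: ldiv_Ch[OF Z])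
      fix c assume "c \<in> arr K" "ldiv K c (Iv u y) \<and> ldiv K c (Ch Z)"
      then obtain w' where c: "c = Iv u w'" "w' \<in> P" "u \<le> w'" "w' \<le> y" "w' \<in> Z" "w' \<noteq> v"
        by (auto simp: ldiv_Iv[OF a] ldiv_Ch[OF Z])
      have "w' = u"
      proof (rule ccontr)
        assume "w' \<noteq> u"
        then have ow: "opn w'" using mc_cases[OF Z c(5)] c(6) by blast
        have "w' \<le> v" using mc_mem[OF Z c(5)] by blast
        then have "w' \<le> w0" using w(5) c by blast
        have "u < w0" using ow \<open>w' \<le> w0\<close> unfolding opn_def by (blast intro: less_le_trans)
        moreover have "w0 < v" using w(4) w0v by (simp add: order.strict_iff_order)
        ultimately have "opn w0" using w(1) by (simp add: opn_def)
        then have "w0 \<in> Z" using mc_close[OF Z c(5) ow] \<open>w' \<le> w0\<close> by blast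
        then show False using False by blast
      qed
      then show "ldiv K c (Iv u u)" using c uP by (auto simp: ldiv_Iv[OF uu_arr])
    qed
  qed
qed

lemma rg_IC:
  assumes a: "Iv x v \<in> arr K" and Z: "Z \<in> MC"
  shows "\<exists>d. RG (Iv x v) (Ch Z) d"
proof -
  have h: "x \<in> P" "x \<le> v" "x \<noteq> u" using a by (auto simp: Iv_arr)
  obtain w0 where w: "w0 \<in> P" "x \<le> w0" "u \<le> w0" "w0 \<le> v" "\<forall>w'\<in>P. x \<le> w' \<and> u \<le> w' \<and> w' \<le> v \<longrightarrow> w0 \<le> w'"
    using joins[OF vP h(1) uP h(2) order.strict_implies_order[OF uv]] by blast
  have w0u: "w0 \<noteq> u" using w h umin[of x] by auto
  show ?thesis
  proof (cases "w0 \<in> Z")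
    case True
    have d: "Iv w0 v \<in> arr K" using w w0u vP by (auto simp: Iv_arr)
    show ?thesis unfolding RG_def
    proof (intro exI[of _ "Iv w0 v"] conjI ballI impI)
      show "Iv w0 v \<in> arr K" by (rule d)
      show "rdiv K (Iv w0 v) (Iv x v)" using w by (auto simp: rdiv_Iv[OF a])
      show "rdiv K (Iv w0 v) (Ch Z)" using True w0u by (auto simp: rdiv_Ch[OF Z])
      fix c assume "c \<in> arr K" "rdiv K c (Iv x v) \<and> rdiv K c (Ch Z)"
      then obtain w' where c: "c = Iv w' v" "w' \<in> P" "x \<le> w'" "w' \<le> v" "w' \<in> Z"
        by (auto simp: rdiv_Iv[OF a] rdiv_Ch[OF Z])
      then have "u \<le> w'" using mc_mem[OF Z] by blast
      then show "rdiv K c (Iv w0 v)" using w(5) c by (auto simp: rdiv_Iv[OF d])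
    qed
  next
    case False
    show ?thesis unfolding RG_def
    proof (intro exI[of _ "Iv v v"] conjI ballI impI)
      show "Iv v v \<in> arr K" by (rule vv_arr)
      show "rdiv K (Iv v v) (Iv x v)" using h vP by (auto simp: rdiv_Iv[OF a])
      show "rdiv K (Iv v v) (Ch Z)" using mc_uv[OF Z] uv_ne by (auto simp: rdiv_Ch[OF Z])
      fix c assume "c \<in> arr K" "rdiv K c (Iv x v) \<and> rdiv K c (Ch Z)"
      then obtain w' where c: "c = Iv w' v" "w' \<in> P" "x \<le> w'" "w' \<le> v" "w' \<in> Z" "w' \<noteq> u"
        by (auto simp: rdiv_Iv[OF a] rdiv_Ch[OF Z])
      have "w' = v"
      proof (rule ccontr)
        assume "w' \<noteq> v"
        then have ow: "opn w'" using mc_cases[OF Z c(5)] c(6) by blast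
        have "u \<le> w'" using mc_mem[OF Z c(5)] by blast
        then have "w0 \<le> w'" using w(5) c by blast
        have "w0 < v" using ow \<open>w0 \<le> w'\<close> unfolding opn_def by (blast intro: le_less_trans)
        moreover have "u < w0" using w(3) w0u by (simp add: order.strict_iff_order)
        ultimately have "opn w0" using w(1) by (simp add: opn_def)
        then have "w0 \<in> Z" using mc_close[OF Z c(5) ow] \<open>w0 \<le> w'\<close> by blast
        then show False using False by blast
      qed
      then show "rdiv K c (Iv v v)" using c vP by (auto simp: rdiv_Iv[OF vv_arr])
    qed
  qed
qed

lemma lg_CC:
  assumes Z: "Z \<in> MC" and W: "W \<in> MC"
  shows "\<exists>d. LG (Ch Z) (Ch W) d"
proof (cases "Z = W")
  case True
  show ?thesis unfolding LG_def
  proof (intro exI[of _ "Ch Z"] conjI ballI impI)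
    show "Ch Z \<in> arr K" using Z by (simp add: Ch_arr)
    show "ldiv K (Ch Z) (Ch Z)" "ldiv K (Ch Z) (Ch W)" unfolding True by (simp_all add: ldiv_Ch[OF W])
    fix c assume "c \<in> arr K" "ldiv K c (Ch Z) \<and> ldiv K c (Ch W)"
    then show "ldiv K c (Ch Z)" by simp
  qed
next
  case False
  show ?thesis unfolding LG_def
  proof (intro exI[of _ "Iv u u"] conjI ballI impI)
    show "Iv u u \<in> arr K" by (rule uu_arr)
    show "ldiv K (Iv u u) (Ch Z)" "ldiv K (Iv u u) (Ch W)" using mc_uv[OF Z] mc_uv[OF W] uv_ne
      by (auto simp: ldiv_Ch[OF Z] ldiv_Ch[OF W])
    fix c assume "c \<in> arr K" "ldiv K c (Ch Z) \<and> ldiv K c (Ch W)"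
    then obtain w where c: "c = Iv u w" "w \<in> Z" "w \<in> W" "w \<noteq> v"
      using False by (auto simp: ldiv_Ch[OF Z] ldiv_Ch[OF W])
    have "w = u"
    proof (rule ccontr)
      assume "w \<noteq> u"
      then have "opn w" using mc_cases[OF Z c(2)] c(4) by blast
      then show False using mc_uniq[OF Z W c(2) c(3)] False by blast
    qed
    then show "ldiv K c (Iv u u)" using c uP by (auto simp: ldiv_Iv[OF uu_arr])
  qed
qed

lemma rg_CC:
  assumes Z: "Z \<in> MC" and W: "W \<in> MC"
  shows "\<exists>d. RG (Ch Z) (Ch W) d"
proof (cases "Z = W")
  case True
  show ?thesis unfolding RG_def
  proof (intro exI[of _ "Ch Z"] conjI ballI impI)
    show "Ch Z \<in> arr K" using Z by (simp add: Ch_arr)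
    show "rdiv K (Ch Z) (Ch Z)" "rdiv K (Ch Z) (Ch W)" unfolding True by (simp_all add: rdiv_Ch[OF W])
    fix c assume "c \<in> arr K" "rdiv K c (Ch Z) \<and> rdiv K c (Ch W)"
    then show "rdiv K c (Ch Z)" by simp
  qed
next
  case False
  show ?thesis unfolding RG_def
  proof (intro exI[of _ "Iv v v"] conjI ballI impI)
    show "Iv v v \<in> arr K" by (rule vv_arr)
    show "rdiv K (Iv v v) (Ch Z)" "rdiv K (Iv v v) (Ch W)" using mc_uv[OF Z] mc_uv[OF W] uv_ne
      by (auto simp: rdiv_Ch[OF Z] rdiv_Ch[OF W])
    fix c assume "c \<in> arr K" "rdiv K c (Ch Z) \<and> rdiv K c (Ch W)"
    then obtain w where c: "c = Iv w v" "w \<in> Z" "w \<in> W" "w \<noteq> u"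
      using False by (auto simp: rdiv_Ch[OF Z] rdiv_Ch[OF W])
    have "w = v"
    proof (rule ccontr)
      assume "w \<noteq> v"
      then have "opn w" using mc_cases[OF Z c(2)] c(4) by blast
      then show False using mc_uniq[OF Z W c(2) c(3)] False by blast
    qed
    then show "rdiv K c (Iv v v)" using c vP by (auto simp: rdiv_Iv[OF vv_arr])
  qed
qed

lemma K_left_gcds: "has_left_gcds K"
  unfolding has_left_gcds_def
proof (intro ballI impI)
  fix a b assume a: "a \<in> arr K" and b: "b \<in> arr K" and s: "src K a = src K b"
  have "\<exists>d. LG a b d"
  proof (cases a)
    case (Iv x y)
    show ?thesis
    proof (cases b)
      case (Iv x' z)
      then have "x' = x" using s \<open>a = Iv x y\<close> by simp
      then show ?thesis using lg_II a b \<open>a = Iv x y\<close> Iv by simp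
    next
      case (Ch Z)
      then have "x = u" using s \<open>a = Iv x y\<close> by simp
      then show ?thesis using lg_IC a b \<open>a = Iv x y\<close> Ch by (simp add: Ch_arr)
    qed
  next
    case (Ch Z)
    show ?thesis
    proof (cases b)
      case (Iv x z)
      then have "x = u" using s \<open>a = Ch Z\<close> by simp
      then have "\<exists>d. LG (Iv u z) (Ch Z) d" using lg_IC[of z Z] a b \<open>a = Ch Z\<close> Iv by (simp add: Ch_arr)
      then obtain d where "LG (Iv u z) (Ch Z) d" by blast
      then have "LG (Ch Z) (Iv u z) d" by (rule LG_sym)
      then show ?thesis using \<open>a = Ch Z\<close> Iv \<open>x = u\<close> by blast
    next
      case (Ch W)
      then show ?thesis using lg_CC a b \<open>a = Ch Z\<close> by (simp add: Ch_arr)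
    qed
  qed
  then show "\<exists>d\<in>arr K. ldiv K d a \<and> ldiv K d b \<and> (\<forall>c\<in>arr K. ldiv K c a \<and> ldiv K c b \<longrightarrow> ldiv K c d)"
    unfolding LG_def by blast
qed

lemma K_right_gcds: "has_right_gcds K"
  unfolding has_right_gcds_def
proof (intro ballI impI)
  fix a b assume a: "a \<in> arr K" and b: "b \<in> arr K" and s: "tgt K a = tgt K b"
  have "\<exists>d. RG a b d"
  proof (cases a)
    case (Iv x y)
    show ?thesis
    proof (cases b)
      case (Iv z y')
      then have "y' = y" using s \<open>a = Iv x y\<close> by simp
      then show ?thesis using rg_II a b \<open>a = Iv x y\<close> Iv by simp
    next
      case (Ch Z)
      then have "y = v" using s \<open>a = Iv x y\<close> by simp
      then show ?thesis using rg_IC a b \<open>a = Iv x y\<close> Ch by (simp add: Ch_arr)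
    qed
  next
    case (Ch Z)
    show ?thesis
    proof (cases b)
      case (Iv x z)
      then have "z = v" using s \<open>a = Ch Z\<close> by simp
      then have "\<exists>d. RG (Iv x v) (Ch Z) d" using rg_IC[of x Z] a b \<open>a = Ch Z\<close> Iv by (simp add: Ch_arr)
      then obtain d where "RG (Iv x v) (Ch Z) d" by blast
      then have "RG (Ch Z) (Iv x v) d" by (rule RG_sym)
      then show ?thesis using \<open>a = Ch Z\<close> Iv \<open>z = v\<close> by blast
    next
      case (Ch W)
      then show ?thesis using rg_CC a b \<open>a = Ch Z\<close> by (simp add: Ch_arr)
    qed
  qed
  then show "\<exists>d\<in>arr K. rdiv K d a \<and> rdiv K d b \<and> (\<forall>c\<in>arr K. rdiv K c a \<and> rdiv K c b \<longrightarrow> rdiv K c d)"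
    unfolding RG_def by blast
qed

lemma K_gcd: "gcd_category K"
  unfolding gcd_category_def
  using K_category K_conical K_lc K_rc K_left_gcds K_right_gcds by blast

end

theorem proposition9p5:
  fixes P :: "'a::order set" and u v :: 'a
  assumes "gcd_monoid (interval_monoid P)"
    and "extreme_spindle P u v"
  shows "gcd_category (Cpuv P u v) \<and> gcd_monoid (umon (Cpuv P u v))"
proof -
  have sp: "spindle P u v" and um: "\<forall>x\<in>P. x \<le> u \<longrightarrow> x = u" and vm: "\<forall>x\<in>P. v \<le> x \<longrightarrow> x = v"
    using assms(2) unfolding extreme_spindle_def by blast+
  define I where "I = {x\<in>P. u < x \<and> x < v}"
  have b: "u \<in> P" "v \<in> P" "u < v" "\<exists>z\<in>P. u < z \<and> z < v"
    and eq: "equiv I {(a, b). a \<in> I \<and> b \<in> I \<and> (a \<le> b \<or> b \<le> a)}"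
    using sp unfolding spindle_def I_def Let_def by blast+
  have trr: "trans {(a, b). a \<in> I \<and> b \<in> I \<and> (a \<le> b \<or> b \<le> a)}" using eq by (simp add: equiv_def)
  interpret S: spinm P u v
  proof (unfold_locales)
    show "u \<in> P" "v \<in> P" "u < v" "\<exists>z\<in>P. u < z \<and> z < v" by (rule b)+
    show "\<And>x. x \<in> P \<Longrightarrow> x \<le> u \<Longrightarrow> x = u" using um by blast
    show "\<And>x. x \<in> P \<Longrightarrow> v \<le> x \<Longrightarrow> x = v" using vm by blast
    show "\<And>x y z. x \<in> P \<Longrightarrow> y \<in> P \<Longrightarrow> z \<in> P \<Longrightarrow> x \<le> y \<Longrightarrow> x \<le> z \<Longrightarrow>
      \<exists>w\<in>P. x \<le> w \<and> w \<le> y \<and> w \<le> z \<and> (\<forall>w'\<in>P. x \<le> w' \<and> w' \<le> y \<and> w' \<le> z \<longrightarrow> w' \<le> w)"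
      by (rule meets[OF assms(1)])
    show "\<And>x y z. x \<in> P \<Longrightarrow> y \<in> P \<Longrightarrow> z \<in> P \<Longrightarrow> y \<le> x \<Longrightarrow> z \<le> x \<Longrightarrow>
      \<exists>w\<in>P. y \<le> w \<and> z \<le> w \<and> w \<le> x \<and> (\<forall>w'\<in>P. y \<le> w' \<and> z \<le> w' \<and> w' \<le> x \<longrightarrow> w \<le> w')"
      by (rule joins[OF assms(1)])
    fix a b c
    assume h: "a \<in> P" "u < a" "a < v" "b \<in> P" "u < b" "b < v" "c \<in> P" "u < c" "c < v"
      "a \<le> b \<or> b \<le> a" "b \<le> c \<or> c \<le> b"
    then have "(a, b) \<in> {(a, b). a \<in> I \<and> b \<in> I \<and> (a \<le> b \<or> b \<le> a)}"
      "(b, c) \<in> {(a, b). a \<in> I \<and> b \<in> I \<and> (a \<le> b \<or> b \<le> a)}" unfolding I_def by auto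
    then have "(a, c) \<in> {(a, b). a \<in> I \<and> b \<in> I \<and> (a \<le> b \<or> b \<le> a)}" by (rule transD[OF trr])
    then show "a \<le> c \<or> c \<le> a" by simp
  qed
  have g: "gcd_category (Cpuv P u v)" by (rule S.K_gcd)
  then show ?thesis using gcd_umon by blast
qed


end
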